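(* Let $q>4$ and let $\mathcal{C}\le\mathbb{F}_q^{2n}$ be a formally self-dual divisible linear code of length $2n$. Then $\mathcal{C}$ is monomially equivalent to the direct sum of $n$ copies of $\langle(1,1)\rangle_{\mathbb{F}_q}$.
   Context: For a linear code $\mathcal{C}\le\mathbb{F}_q^N$, $W_\mathcal{C}(x,y)=\sum_{c\in\mathcal{C}}x^{N-\mathrm{wt}(c)}y^{\mathrm{wt}(c)}$, where $\mathrm{wt}(c)$ is the number of nonzero coordinates. $\mathcal{C}$ is formally self-dual if $W_\mathcal{C}(x,y)=W_\mathcal{C}\big(\tfrac{x+(q-1)y}{\sqrt q},\tfrac{x-y}{\sqrt q}\big)$. $\mathcal{C}$ is divisible if there is an integer $\Delta>1$ dividing the weight of every codeword. Two codes are monomially equivalent if one is the image of the other under $v\mapsto DPv$ with $D$ invertible diagonal and $P$ a permutation matrix; the direct sum of $n$ copies of $\langle(1,1)\rangle_{\mathbb{F}_q}$ is the code in $\mathbb{F}_q^{2n}$ with block-diagonal generator matrix of $n$ blocks $(1\ 1)$. *)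

theory Defs
  imports Complex_Main "HOL-Combinatorics.Permutations"
begin

text \<open>Vectors of length N over a field are modelled as functions nat => 'a
  that vanish outside the index set {0..<N}.\<close>

definition vecs :: "nat \<Rightarrow> (nat \<Rightarrow> 'a::zero) set" where
  "vecs N = {v. \<forall>i. N \<le> i \<longrightarrow> v i = 0}"

definition linear_code :: "nat \<Rightarrow> (nat \<Rightarrow> 'a::field) set \<Rightarrow> bool" where
  "linear_code N C \<longleftrightarrow> C \<subseteq> vecs N \<and> (\<lambda>i. 0) \<in> C
     \<and> (\<forall>u\<in>C. \<forall>v\<in>C. (\<lambda>i. u i + v i) \<in> C)
     \<and> (\<forall>a. \<forall>v\<in>C. (\<lambda>i. a * v i) \<in> C)"

definition wt :: "nat \<Rightarrow> (nat \<Rightarrow> 'a::zero) \<Rightarrow> nat" where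
  "wt N v = card {i. i < N \<and> v i \<noteq> 0}"

definition weight_enum :: "nat \<Rightarrow> (nat \<Rightarrow> 'a::zero) set \<Rightarrow> real \<Rightarrow> real \<Rightarrow> real" where
  "weight_enum N C x y = (\<Sum>c\<in>C. x ^ (N - wt N c) * y ^ (wt N c))"

definition formally_self_dual :: "nat \<Rightarrow> (nat \<Rightarrow> 'a::{finite,field}) set \<Rightarrow> bool" where
  "formally_self_dual N (C :: (nat \<Rightarrow> 'a) set) \<longleftrightarrow>
     (\<forall>x y. weight_enum N C x y =
        weight_enum N C ((x + (real (card (UNIV::'a set)) - 1) * y) / sqrt (real (card (UNIV::'a set))))
                        ((x - y) / sqrt (real (card (UNIV::'a set)))))"

definition divisible_code :: "nat \<Rightarrow> (nat \<Rightarrow> 'a::zero) set \<Rightarrow> bool" where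
  "divisible_code N C \<longleftrightarrow> (\<exists>\<Delta>::nat. \<Delta> > 1 \<and> (\<forall>c\<in>C. \<Delta> dvd wt N c))"

text \<open>D' is the image of C under v |-> D P v, D invertible diagonal, P permutation matrix.\<close>
definition monomially_equivalent ::
  "nat \<Rightarrow> (nat \<Rightarrow> 'a::field) set \<Rightarrow> (nat \<Rightarrow> 'a) set \<Rightarrow> bool" where
  "monomially_equivalent N C D \<longleftrightarrow>
     (\<exists>d \<sigma>. \<sigma> permutes {..<N} \<and> (\<forall>i<N. d i \<noteq> 0) \<and>
        D = (\<lambda>c. \<lambda>i. if i < N then d i * c (\<sigma> i) else 0) ` C)"

text \<open>Direct sum of n copies of <(1,1)>: the row space of the block-diagonal
  n x 2n generator matrix with blocks (1 1); codeword x G has i-th entry x_(i div 2).\<close>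
definition rep_sum_code :: "nat \<Rightarrow> (nat \<Rightarrow> 'a::field) set" where
  "rep_sum_code n = {(\<lambda>i. if i < 2 * n then a (i div 2) else 0) | a. True}"

end

theory Submission
  imports Defs "HOL-Computational_Algebra.Fundamental_Theorem_Algebra"
begin

lemma vecs_finite: "finite (vecs N :: (nat \<Rightarrow> 'a::{finite,zero}) set)"
proof -
  have "vecs N \<subseteq> (\<lambda>xs i. if i < N then xs ! i else 0) ` {xs :: 'a list. set xs \<subseteq> UNIV \<and> length xs = N}"
  proof
    fix v :: "nat \<Rightarrow> 'a" assume "v \<in> vecs N"
    hence "v = (\<lambda>i. if i < N then map v [0..<N] ! i else 0)"
      by (auto simp: vecs_def fun_eq_iff)
    thus "v \<in> (\<lambda>xs i. if i < N then xs ! i else 0) ` {xs. set xs \<subseteq> UNIV \<and> length xs = N}"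
      by (intro image_eqI[of _ _ "map v [0..<N]"]) auto
  qed
  moreover have "finite {xs :: 'a list. set xs \<subseteq> UNIV \<and> length xs = N}"
    by (rule finite_lists_length_eq) simp
  ultimately show ?thesis by (rule finite_subset[OF _ finite_imageI])
qed

lemma wt_le: "wt N c \<le> N"
proof -
  have "{i. i < N \<and> c i \<noteq> 0} \<subseteq> {..<N}" by auto
  thus ?thesis unfolding wt_def using card_mono[of "{..<N}"] by fastforce
qed

lemma wt_0_iff: "c \<in> vecs N \<Longrightarrow> wt N c = 0 \<longleftrightarrow> c = (\<lambda>i. 0)"
  unfolding wt_def vecs_def by (auto simp: fun_eq_iff) (metis not_le)


lemma poly_zero_on_reals:
  fixes P :: "complex poly"
  assumes "\<And>r. poly P (of_real r) = 0"
  shows "P = 0"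
proof (rule ccontr)
  assume "P \<noteq> 0"
  hence fin: "finite {x. poly P x = 0}" by (rule poly_roots_finite)
  have "range (of_real :: real \<Rightarrow> complex) \<subseteq> {x. poly P x = 0}" using assms by auto
  hence "finite (range (of_real :: real \<Rightarrow> complex))" using fin finite_subset by blast
  moreover have "inj (of_real :: real \<Rightarrow> complex)" by (simp add: inj_on_def)
  ultimately have "finite (UNIV :: real set)" using finite_imageD by blast
  thus False using infinite_UNIV_char_0[where 'a=real] by simp
qed

locale fsd_setting =
  fixes C :: "(nat \<Rightarrow> 'a::{finite,field}) set" and n :: nat and q :: nat
  assumes q_def: "q = card (UNIV::'a set)"
    and q_gt: "q > 4"
    and lin: "linear_code (2*n) C"
    and fsd: "formally_self_dual (2*n) C"
begin

abbreviation "N \<equiv> 2*n"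

lemma C_sub: "C \<subseteq> vecs N" using lin unfolding linear_code_def by blast
lemma zero_in: "(\<lambda>i. 0) \<in> C" using lin unfolding linear_code_def by blast
lemma add_in: "u \<in> C \<Longrightarrow> v \<in> C \<Longrightarrow> (\<lambda>i. u i + v i) \<in> C" using lin unfolding linear_code_def by blast
lemma smult_in: "v \<in> C \<Longrightarrow> (\<lambda>i. c * v i) \<in> C" using lin unfolding linear_code_def by blast
lemma finC: "finite C" by (rule finite_subset[OF C_sub vecs_finite])

lemma q_pos: "q > 0" using q_gt by simp

lemma wt0_in: "c \<in> C \<Longrightarrow> wt N c = 0 \<longleftrightarrow> c = (\<lambda>i. 0)"
  using wt_0_iff[of c N] C_sub by auto

lemma sum_wt0:
  fixes f :: "nat \<Rightarrow> 'b::comm_ring_1"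
  assumes "f 0 = 1" "\<And>k. k > 0 \<Longrightarrow> f k = 0"
  shows "(\<Sum>c\<in>C. f (wt N c)) = 1"
proof -
  have "(\<Sum>c\<in>C. f (wt N c)) = (\<Sum>c\<in>C. if c = (\<lambda>i. 0) then 1 else 0)"
  proof (rule sum.cong[OF refl])
    fix c assume c: "c \<in> C"
    show "f (wt N c) = (if c = (\<lambda>i. 0) then 1 else 0)"
      using wt0_in[OF c] assms by (cases "wt N c = 0") auto
  qed
  also have "\<dots> = 1" using finC zero_in by (simp add: sum.delta')
  finally show ?thesis .
qed

lemma card_C: "card C = q ^ n"
proof -
  have "weight_enum N C 1 1 = real (card C)" by (simp add: weight_enum_def)
  also have "weight_enum N C 1 1 = weight_enum N C (sqrt q) 0"
  proof -
    have "weight_enum N C 1 1 = weight_enum N C ((1 + (real q - 1) * 1) / sqrt q) ((1 - 1) / sqrt q)"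
      using fsd unfolding formally_self_dual_def q_def by blast
    also have "(1 + (real q - 1) * 1) / sqrt q = sqrt q"
    proof -
      have "1 + (real q - 1) * 1 = real q" by simp
      thus ?thesis by (simp add: real_div_sqrt)
    qed
    finally show ?thesis by simp
  qed
  also have "weight_enum N C (sqrt q) 0 = sqrt q ^ N * (\<Sum>c\<in>C. (if wt N c = 0 then 1 else 0))"
    unfolding weight_enum_def sum_distrib_left by (rule sum.cong) auto
  also have "(\<Sum>c\<in>C. (if wt N c = 0 then 1 else 0) :: real) = 1" by (rule sum_wt0) auto
  also have "sqrt (real q) ^ N = real q ^ n" by (simp add: power_mult)
  finally have "real (card C) = real (q ^ n)" by simp
  thus ?thesis by (simp only: of_nat_eq_iff)
qed

definition Wc :: "complex \<Rightarrow> complex \<Rightarrow> complex" where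
  "Wc x y = (\<Sum>c\<in>C. x ^ (N - wt N c) * y ^ (wt N c))"

abbreviation "sq \<equiv> complex_of_real (sqrt (real q))"
abbreviation "aa \<equiv> (of_nat q - 1 :: complex)"

lemma Wc_real: "Wc (of_real x) (of_real y) = of_real (weight_enum N C x y)"
  by (simp add: Wc_def weight_enum_def)

lemma Wc_inv_real:
  "Wc (of_real x) (of_real y) = Wc ((of_real x + aa * of_real y) / sq) ((of_real x - of_real y) / sq)"
proof -
  have "Wc (of_real x) (of_real y) = of_real (weight_enum N C ((x + (real q - 1) * y) / sqrt q) ((x - y) / sqrt q))"
    using fsd unfolding formally_self_dual_def Wc_real q_def by metis
  also have "\<dots> = Wc (of_real ((x + (real q - 1) * y) / sqrt q)) (of_real ((x - y) / sqrt q))"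
    by (simp add: Wc_real[symmetric])
  also have "\<dots> = Wc ((of_real x + aa * of_real y) / sq) ((of_real x - of_real y) / sq)"
    by simp
  finally show ?thesis .
qed

lemma Wc_inv: "Wc x y = Wc ((x + aa * y) / sq) ((x - y) / sq)"
proof -
  define D where "D x y = Wc x y - Wc ((x + aa * y) / sq) ((x - y) / sq)" for x y
  have polx: "D x y = poly (\<Sum>c\<in>C. [:0,1:] ^ (N - wt N c) * [:y:] ^ (wt N c)
       - [:aa * y / sq, 1 / sq:] ^ (N - wt N c) * [:- y / sq, 1 / sq:] ^ (wt N c)) x" for x y
    unfolding D_def Wc_def poly_sum by (simp add: sum_subtractf add_divide_distrib diff_divide_distrib add_ac)
  have poly_y: "D x y = poly (\<Sum>c\<in>C. [:x:] ^ (N - wt N c) * [:0,1:] ^ (wt N c)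
       - [:x / sq, aa / sq:] ^ (N - wt N c) * [:x / sq, - 1 / sq:] ^ (wt N c)) y" for x y
  proof -
    have h1: "(x + aa * y) / sq = x / sq + y * (aa / sq)" by (simp add: add_divide_distrib)
    have h2: "(x - y) / sq = x / sq + y * (- 1 / sq)" by (simp add: diff_divide_distrib)
    show ?thesis unfolding D_def Wc_def poly_sum h1 h2 by (simp add: sum_subtractf)
  qed
  have real0: "D (of_real x) (of_real y) = 0" for x y
    unfolding D_def using Wc_inv_real by simp
  have step1: "D x (of_real y) = 0" for x y
  proof -
    have "(\<Sum>c\<in>C. [:0,1:] ^ (N - wt N c) * [:of_real y:] ^ (wt N c)
       - [:aa * of_real y / sq, 1 / sq:] ^ (N - wt N c) * [:- of_real y / sq, 1 / sq:] ^ (wt N c)) = 0"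
      by (rule poly_zero_on_reals, subst polx[symmetric], rule real0)
    thus ?thesis by (simp add: polx)
  qed
  have "(\<Sum>c\<in>C. [:x:] ^ (N - wt N c) * [:0,1:] ^ (wt N c)
       - [:x / sq, aa / sq:] ^ (N - wt N c) * [:x / sq, - 1 / sq:] ^ (wt N c)) = 0"
    by (rule poly_zero_on_reals, subst poly_y[symmetric], rule step1)
  hence "D x y = 0" by (simp add: poly_y)
  thus ?thesis by (simp add: D_def)
qed

end

context fsd_setting
begin

lemma q_ne1: "(of_nat q :: complex) \<noteq> 1" using q_gt by simp
lemma aa_ne0: "aa \<noteq> 0" using q_ne1 by simp
lemma sq_ne0: "sq \<noteq> 0" using q_pos by simp

lemma Wc_hom: "Wc (k * x) (k * y) = k ^ N * Wc x y"
  unfolding Wc_def sum_distrib_left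
proof (rule sum.cong[OF refl])
  fix c assume "c \<in> C"
  have w: "wt N c \<le> N" by (rule wt_le)
  have "(k * x) ^ (N - wt N c) * (k * y) ^ wt N c = k ^ (N - wt N c + wt N c) * (x ^ (N - wt N c) * y ^ wt N c)"
    by (simp add: power_mult_distrib power_add mult_ac)
  also have "N - wt N c + wt N c = N" using w by simp
  finally show "(k * x) ^ (N - wt N c) * (k * y) ^ wt N c = k ^ N * (x ^ (N - wt N c) * y ^ wt N c)" .
qed

lemma Wc_10: "Wc 1 0 = 1"
  unfolding Wc_def by (rule sum_wt0) auto

lemma Wc_11: "Wc 1 1 = of_nat (card C)"
  unfolding Wc_def by simp

lemma Wc_x0: "Wc e 0 = e ^ N"
  using Wc_hom[of e 1 0] by (simp add: Wc_10)

end

locale fsd_div = fsd_setting +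
  fixes l :: nat
  assumes l_prime: "prime l"
    and l_dvd: "\<And>c. c \<in> C \<Longrightarrow> l dvd wt N c"
    and n_pos: "n \<ge> 1"
begin

lemma Wc_rot: "z ^ l = 1 \<Longrightarrow> Wc x (z * y) = Wc x y"
  unfolding Wc_def
proof (rule sum.cong[OF refl])
  fix c assume z: "z ^ l = 1" and c: "c \<in> C"
  from l_dvd[OF c] obtain m where m: "wt N c = l * m" by blast
  have "(z * y) ^ wt N c = (z ^ l) ^ m * y ^ wt N c" by (simp add: m power_mult_distrib power_mult)
  thus "x ^ (N - wt N c) * (z * y) ^ wt N c = x ^ (N - wt N c) * y ^ wt N c" using z by simp
qed

lemma roots_eigen:
  fixes z m1 m2 t :: complex
  assumes z: "z ^ l = 1"
    and m12: "m1 \<noteq> m2"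
    and e1: "m1 ^ 2 = (1 - z) * m1 + of_nat q * z"
    and e2: "m2 ^ 2 = (1 - z) * m2 + of_nat q * z"
    and nroot: "\<And>k. k > 0 \<Longrightarrow> m1 ^ k \<noteq> m2 ^ k"
    and t: "Wc 1 t = 0"
  shows "t = (m1 - 1) / (aa * z) \<or> t = (m2 - 1) / (aa * z)"
proof (rule ccontr)
  assume nt: "\<not> ?thesis"
  have z0: "z \<noteq> 0" using z l_prime by (metis power_0_left zero_neq_one not_prime_0)
  define t1 where "t1 = (m1 - 1) / (aa * z)"
  define t2 where "t2 = (m2 - 1) / (aa * z)"
  define l1 where "l1 = m1 / sq"
  define l2 where "l2 = m2 / sq"
  have azne: "aa * z \<noteq> 0" using z0 aa_ne0 by simp
  have qz: "of_nat q * z \<noteq> 0" using z0 q_pos by simp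
  have m1_ne1: "m1 \<noteq> 1"
  proof
    assume "m1 = 1" with e1 have "of_nat q * z = z" by (simp add: algebra_simps)
    hence "(of_nat q - 1) * z = 0" by (simp add: algebra_simps)
    thus False using z0 q_ne1 by simp
  qed
  have m2_ne0: "m2 \<noteq> 0" using e2 qz by (auto simp: power2_eq_square)
  have t1_ne0: "t1 \<noteq> 0" using m1_ne1 azne by (simp add: t1_def)
  have t12: "t1 \<noteq> t2" using m12 azne by (simp add: t1_def t2_def divide_cancel_right)
  have l2_ne0: "l2 \<noteq> 0" using m2_ne0 sq_ne0 by (simp add: l2_def)
  have eig_a: "(1 + aa * z * ti) / sq = li \<and> (1 - z * ti) / sq = li * ti"
    if ti: "ti = (mi - 1) / (aa * z)" and li: "li = mi / sq" and ei: "mi ^ 2 = (1 - z) * mi + of_nat q * z"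
    for ti li mi
  proof
    have "aa * z * ti = mi - 1" using ti azne by simp
    thus "(1 + aa * z * ti) / sq = li" using li by simp
    have "(1 - z * ti) * (aa * z) = li * ti * sq * (aa * z)"
    proof -
      have "(1 - z * ti) * (aa * z) = aa * z - z * (aa * z * ti)" by algebra
      also have "\<dots> = aa * z - z * (mi - 1)" by (simp only: \<open>aa * z * ti = mi - 1\<close>)
      also have "\<dots> = mi * (mi - 1)" using ei by (simp add: power2_eq_square algebra_simps)
      also have "\<dots> = li * ti * sq * (aa * z)" using li ti azne sq_ne0 by simp
      finally show ?thesis .
    qed
    hence "1 - z * ti = li * ti * sq" using azne by (metis mult_right_cancel)
    thus "(1 - z * ti) / sq = li * ti" using sq_ne0 by simp
  qed
  have E1: "(1 + aa * z * t1) / sq = l1" "(1 - z * t1) / sq = l1 * t1"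
    using eig_a[OF t1_def l1_def e1] by auto
  have E2: "(1 + aa * z * t2) / sq = l2" "(1 - z * t2) / sq = l2 * t2"
    using eig_a[OF t2_def l2_def e2] by auto
  define hm where "hm = (\<lambda>(x::complex, y::complex). ((x + aa * z * y) / sq, (x - z * y) / sq))"
  have hm_inv: "Wc (fst (hm v)) (snd (hm v)) = Wc (fst v) (snd v)" for v
  proof -
    obtain x y where v: "v = (x, y)" by (cases v)
    have "Wc x y = Wc x (z * y)" using Wc_rot[OF z] by simp
    also have "\<dots> = Wc ((x + aa * (z * y)) / sq) ((x - z * y) / sq)" by (rule Wc_inv)
    finally show ?thesis by (simp add: v hm_def mult.assoc)
  qed
  have hm_step: "hm (A + B, A * t1 + B * t2) = (A * l1 + B * l2, A * l1 * t1 + B * l2 * t2)" for A B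
  proof -
    have "(A + B + aa * z * (A * t1 + B * t2)) / sq = A * ((1 + aa * z * t1) / sq) + B * ((1 + aa * z * t2) / sq)"
      using sq_ne0 by (simp add: field_simps)
    also have "\<dots> = A * l1 + B * l2" by (simp only: E1 E2)
    finally have f1: "(A + B + aa * z * (A * t1 + B * t2)) / sq = A * l1 + B * l2" .
    have "(A + B - z * (A * t1 + B * t2)) / sq = A * ((1 - z * t1) / sq) + B * ((1 - z * t2) / sq)"
      using sq_ne0 by (simp add: field_simps)
    also have "\<dots> = A * l1 * t1 + B * l2 * t2" by (simp only: E1 E2 mult.assoc)
    finally have f2: "(A + B - z * (A * t1 + B * t2)) / sq = A * l1 * t1 + B * l2 * t2" .
    show ?thesis unfolding hm_def using f1 f2 by simp
  qed
  have hm_iter: "(hm ^^ k) (A + B, A * t1 + B * t2) = (A * l1 ^ k + B * l2 ^ k, A * l1 ^ k * t1 + B * l2 ^ k * t2)" for k A B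
  proof (induction k)
    case 0 then show ?case by simp
  next
    case (Suc k)
    have "(hm ^^ Suc k) (A + B, A * t1 + B * t2) = hm ((A * l1 ^ k) + (B * l2 ^ k), (A * l1 ^ k) * t1 + (B * l2 ^ k) * t2)"
      using Suc by simp
    also have "\<dots> = (A * l1 ^ Suc k + B * l2 ^ Suc k, A * l1 ^ Suc k * t1 + B * l2 ^ Suc k * t2)"
      by (subst hm_step) (simp add: mult_ac)
    finally show ?case .
  qed
  have Wc_iter: "Wc (fst ((hm ^^ k) v)) (snd ((hm ^^ k) v)) = Wc (fst v) (snd v)" for k v
    by (induction k) (auto simp: hm_inv)
  define al where "al = (t - t2) / (t1 - t2)"
  define be where "be = (t1 - t) / (t1 - t2)"
  have t12': "t1 - t2 \<noteq> 0" using t12 by simp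
  have ab1: "al + be = 1"
  proof -
    have "al + be = ((t - t2) + (t1 - t)) / (t1 - t2)" unfolding al_def be_def by (rule add_divide_distrib[symmetric])
    also have "\<dots> = 1" using t12' by simp
    finally show ?thesis .
  qed
  have ab2: "al * t1 + be * t2 = t"
  proof -
    have "al * t1 + be * t2 = ((t - t2) * t1 + (t1 - t) * t2) / (t1 - t2)" by (simp only: al_def be_def times_divide_eq_left add_divide_distrib)
    also have "(t - t2) * t1 + (t1 - t) * t2 = t * (t1 - t2)" by (simp add: algebra_simps)
    also have "t * (t1 - t2) / (t1 - t2) = t" using t12' by simp
    finally show ?thesis .
  qed
  have al0: "al \<noteq> 0" using nt t12 by (auto simp: al_def t2_def)
  have be0: "be \<noteq> 0" using nt t12 by (auto simp: be_def t1_def)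
  define rho where "rho = m1 / m2"
  have zero_at: "Wc (al * rho ^ k + be) (al * rho ^ k * t1 + be * t2) = 0" for k
  proof -
    have "0 = Wc 1 t" using t by simp
    also have "\<dots> = Wc (fst ((hm ^^ k) (al + be, al * t1 + be * t2))) (snd ((hm ^^ k) (al + be, al * t1 + be * t2)))"
      using Wc_iter[of k "(al + be, al * t1 + be * t2)"] ab1 ab2 by simp
    also have "\<dots> = Wc (al * l1 ^ k + be * l2 ^ k) (al * l1 ^ k * t1 + be * l2 ^ k * t2)"
      by (simp add: hm_iter)
    also have "l1 = l2 * rho" using m2_ne0 sq_ne0 by (simp add: l1_def l2_def rho_def)
    also have "Wc (al * (l2 * rho) ^ k + be * l2 ^ k) (al * (l2 * rho) ^ k * t1 + be * l2 ^ k * t2)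
       = Wc (l2 ^ k * (al * rho ^ k + be)) (l2 ^ k * (al * rho ^ k * t1 + be * t2))"
      by (simp add: power_mult_distrib algebra_simps)
    also have "\<dots> = (l2 ^ k) ^ N * Wc (al * rho ^ k + be) (al * rho ^ k * t1 + be * t2)"
      by (rule Wc_hom)
    finally show ?thesis using l2_ne0 by simp
  qed
  define Psi where "Psi = (\<Sum>c\<in>C. [:be, al:] ^ (N - wt N c) * [:be * t2, al * t1:] ^ wt N c)"
  have Psi_eval: "poly Psi x = Wc (al * x + be) (al * x * t1 + be * t2)" for x
    unfolding Psi_def Wc_def poly_sum by (simp add: algebra_simps)
  have inj: "inj (\<lambda>k::nat. rho ^ k)"
  proof (rule injI)
    fix i j :: nat assume eq: "rho ^ i = rho ^ j"
    have rho0: "rho \<noteq> 0" using m2_ne0 m1_ne1 e1 qz by (auto simp: rho_def power2_eq_square)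
    show "i = j"
    proof (rule ccontr)
      assume "i \<noteq> j"
      then consider "i < j" | "j < i" by linarith
      then obtain d where d: "d > 0" "rho ^ d = 1"
      proof cases
        case 1
        hence "rho ^ j = rho ^ i * rho ^ (j - i)" by (simp add: power_add[symmetric])
        with eq rho0 have "rho ^ (j - i) = 1" by simp
        with 1 show ?thesis using that[of "j - i"] by simp
      next
        case 2
        hence "rho ^ i = rho ^ j * rho ^ (i - j)" by (simp add: power_add[symmetric])
        with eq rho0 have "rho ^ (i - j) = 1" by simp
        with 2 show ?thesis using that[of "i - j"] by simp
      qed
      hence "m1 ^ d = m2 ^ d" using m2_ne0 by (simp add: rho_def power_divide)
      with nroot[OF d(1)] show False by simp
    qed
  qed
  have "Psi = 0"
  proof (rule ccontr)
    assume "Psi \<noteq> 0"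
    hence "finite {x. poly Psi x = 0}" by (rule poly_roots_finite)
    moreover have "range (\<lambda>k::nat. rho ^ k) \<subseteq> {x. poly Psi x = 0}"
      using zero_at by (auto simp: Psi_eval mult_ac)
    ultimately have "finite (range (\<lambda>k::nat. rho ^ k))" using finite_subset by blast
    hence "finite (UNIV :: nat set)" using inj finite_imageD by blast
    thus False by simp
  qed
  define x0 where "x0 = - (be * t2) / (al * t1)"
  have "poly Psi x0 = 0" using \<open>Psi = 0\<close> by simp
  hence "Wc (al * x0 + be) 0 = 0" using al0 t1_ne0 by (simp add: Psi_eval x0_def field_simps)
  hence "(al * x0 + be) ^ N = 0" by (simp add: Wc_x0)
  hence "al * x0 + be = 0" by simp
  hence "be * (t1 - t2) = 0" using al0 t1_ne0 by (simp add: x0_def field_simps)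
  thus False using be0 t12 by simp
qed

end

definition addcl :: "'a::field set \<Rightarrow> bool" where
  "addcl S \<longleftrightarrow> 0 \<in> S \<and> (\<forall>x\<in>S. \<forall>y\<in>S. x + y \<in> S)"

lemma addcl_nat_mult: "addcl S \<Longrightarrow> x \<in> S \<Longrightarrow> of_nat k * x \<in> S"
  by (induction k) (auto simp: addcl_def distrib_right)

lemma CHAR_field_prime: "prime CHAR('a::{finite,field})"
  using prime_CHAR_semidom[where ?'a='a] finite_imp_CHAR_pos[where ?'a='a] by simp

lemma of_nat_mod_CHAR: "(of_nat (m mod CHAR('a)) :: 'a::{finite,field}) = of_nat m"
proof -
  have "m = m mod CHAR('a) + CHAR('a) * (m div CHAR('a))" by simp
  hence "(of_nat m :: 'a) = of_nat (m mod CHAR('a)) + of_nat CHAR('a) * of_nat (m div CHAR('a))"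
    by (metis of_nat_add of_nat_mult)
  thus ?thesis by simp
qed

lemma addcl_neg:
  assumes "addcl S" "x \<in> S"
  shows "- x \<in> (S :: 'a::{finite,field} set)"
proof -
  have p: "CHAR('a) > 0" using CHAR_field_prime[where ?'a='a] prime_gt_0_nat by blast
  have "(of_nat (CHAR('a) - 1) :: 'a) * x + x = of_nat CHAR('a) * x"
    using p by (simp add: of_nat_diff distrib_right)
  hence "(of_nat (CHAR('a) - 1) :: 'a) * x = - x" by (simp add: eq_neg_iff_add_eq_0)
  with addcl_nat_mult[OF assms, of "CHAR('a) - 1"] show ?thesis by simp
qed

lemma addcl_div:
  assumes S: "addcl S" and d: "0 < d" "d < CHAR('a)" and x: "of_nat d * x \<in> (S :: 'a::{finite,field} set)"
  shows "x \<in> S"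
proof -
  have pr: "prime CHAR('a)" by (rule CHAR_field_prime)
  have "coprime d CHAR('a)"
    using d pr by (metis coprime_commute prime_imp_coprime nat_dvd_not_less)
  hence g: "gcd d CHAR('a) = 1" by simp
  from bezout_nat[of d "CHAR('a)"] d obtain u v where "d * u = CHAR('a) * v + gcd d CHAR('a)" by auto
  hence "d * u = CHAR('a) * v + 1" using g by simp
  hence "(of_nat d * of_nat u :: 'a) = of_nat CHAR('a) * of_nat v + 1" by (metis of_nat_add of_nat_mult of_nat_1)
  hence du: "(of_nat u :: 'a) * of_nat d = 1" by (simp add: mult.commute)
  have "of_nat u * (of_nat d * x) \<in> S" by (rule addcl_nat_mult[OF S x])
  thus ?thesis by (simp add: mult.assoc[symmetric] du)
qed

lemma field_card_prime_power: "\<exists>k. card (UNIV :: 'a::{finite,field} set) = CHAR('a) ^ k"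
proof -
  define p where "p = CHAR('a)"
  have pr: "prime p" unfolding p_def by (rule CHAR_field_prime)
  have p1: "p > 1" using pr prime_gt_1_nat by blast
  have main: "\<And>S. card (UNIV :: 'a set) - card S = m \<Longrightarrow> addcl (S :: 'a set) \<Longrightarrow> (\<exists>j. card S = p ^ j)
      \<Longrightarrow> \<exists>k. card (UNIV :: 'a set) = p ^ k" for m
  proof (induction m rule: less_induct)
    case (less m S)
    show ?case
    proof (cases "S = UNIV")
      case True then show ?thesis using less.prems(3) by simp
    next
      case False
      then obtain x where x: "x \<notin> S" by blast
      obtain j where j: "card S = p ^ j" using less.prems(3) by blast
      define f where "f = (\<lambda>(s, i). s + of_nat i * x :: 'a)"
      define S' where "S' = f ` (S \<times> {..<p})"
      have finS: "finite S" by simp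
      have injf: "inj_on f (S \<times> {..<p})"
      proof (rule inj_onI, clarify)
        fix s i s' i' assume s: "s \<in> S" "i < p" "s' \<in> S" "i' < p" and eq: "f (s, i) = f (s', i')"
        have key: "i = i'"
        proof (rule ccontr)
          assume "i \<noteq> i'"
          then consider "i' < i" | "i < i'" by linarith
          thus False
          proof cases
            case 1
            have "s + of_nat i * x = s' + of_nat i' * x" using eq by (simp add: f_def)
            hence "of_nat (i - i') * x = s' + - s"
              using 1 by (simp add: of_nat_diff algebra_simps)
            moreover have "s' + - s \<in> S"
              using less.prems(2) s(3) addcl_neg[OF less.prems(2) s(1)] unfolding addcl_def by blast
            ultimately have "of_nat (i - i') * x \<in> S" by simp
            hence "x \<in> S" using addcl_div[OF less.prems(2), of "i - i'" x] 1 s unfolding p_def by simp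
            with x show False by simp
          next
            case 2
            have "s + of_nat i * x = s' + of_nat i' * x" using eq by (simp add: f_def)
            hence "of_nat (i' - i) * x = s + - s'"
              using 2 by (simp add: of_nat_diff algebra_simps)
            moreover have "s + - s' \<in> S"
              using less.prems(2) s(1) addcl_neg[OF less.prems(2) s(3)] unfolding addcl_def by blast
            ultimately have "of_nat (i' - i) * x \<in> S" by simp
            hence "x \<in> S" using addcl_div[OF less.prems(2), of "i' - i" x] 2 s unfolding p_def by simp
            with x show False by simp
          qed
        qed
        with eq show "s = s' \<and> i = i'" by (simp add: f_def)
      qed
      have cS': "card S' = p ^ Suc j"
        unfolding S'_def using card_image[OF injf] j by (simp add: card_cartesian_product)
      have acS': "addcl S'"
        unfolding addcl_def
      proof (intro conjI ballI)
        show "0 \<in> S'" unfolding S'_def using less.prems(2) p1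
          by (intro image_eqI[of _ _ "(0, 0)"]) (auto simp: f_def addcl_def)
      next
        fix u v assume "u \<in> S'" "v \<in> S'"
        then obtain s i s' i' where u: "u = s + of_nat i * x" "s \<in> S" "i < p" and v: "v = s' + of_nat i' * x" "s' \<in> S" "i' < p"
          unfolding S'_def f_def by auto
        have "u + v = (s + s') + of_nat ((i + i') mod p) * x"
          by (simp add: u v p_def of_nat_mod_CHAR algebra_simps)
        moreover have "s + s' \<in> S" using less.prems(2) u v unfolding addcl_def by blast
        moreover have "(i + i') mod p < p" using p1 by simp
        ultimately show "u + v \<in> S'" unfolding S'_def f_def by (intro image_eqI[of _ _ "(s + s', (i + i') mod p)"]) auto
      qed
      have sub: "S \<subset> S'"
      proof
        show "S \<subseteq> S'"
        proof
          fix s assume "s \<in> S"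
          thus "s \<in> S'" unfolding S'_def f_def using p1 by (intro image_eqI[of _ _ "(s, 0)"]) auto
        qed
        have "x \<in> S'" unfolding S'_def f_def using p1 less.prems(2)
          by (intro image_eqI[of _ _ "(0, 1)"]) (auto simp: addcl_def)
        with x show "S \<noteq> S'" by blast
      qed
      have "card S < card S'" using sub by (simp add: psubset_card_mono)
      moreover have "card S' \<le> card (UNIV :: 'a set)" by (simp add: card_mono)
      ultimately have "card (UNIV :: 'a set) - card S' < m" using less.prems(1) by linarith
      from less.IH[OF this refl acS'] cS' show ?thesis by blast
    qed
  qed
  have "addcl {0 :: 'a}" by (simp add: addcl_def)
  moreover have "\<exists>j. card {0 :: 'a} = p ^ j" by (intro exI[of _ 0]) simp
  ultimately show ?thesis using main[OF refl] unfolding p_def by blast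
qed


definition zeta :: "nat \<Rightarrow> complex" where "zeta l = cis (2 * pi / real l)"

lemma zeta_pow: "l > 0 \<Longrightarrow> zeta l ^ m = cis (2 * pi * real m / real l)"
  unfolding zeta_def DeMoivre by (simp add: mult_ac)

lemma zeta_pow_l: "l > 0 \<Longrightarrow> zeta l ^ l = 1"
  by (simp add: zeta_pow complex_eq_iff)

lemma zeta_pow_mod: "l > 0 \<Longrightarrow> zeta l ^ m = zeta l ^ (m mod l)"
proof -
  assume l: "l > 0"
  have "zeta l ^ m = zeta l ^ (l * (m div l) + m mod l)" by simp
  also have "\<dots> = (zeta l ^ l) ^ (m div l) * zeta l ^ (m mod l)" by (simp only: power_add power_mult)
  finally have "zeta l ^ m = (zeta l ^ l) ^ (m div l) * zeta l ^ (m mod l)" .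
  thus ?thesis using zeta_pow_l[OF l] by simp
qed

lemma zeta_pow_eq_1: "l > 0 \<Longrightarrow> zeta l ^ m = 1 \<longleftrightarrow> l dvd m"
proof
  assume l: "l > 0" and h: "zeta l ^ m = 1"
  have inj: "inj_on (\<lambda>k. cis (2 * pi * real k / real l)) {..<l}"
    using bij_betw_roots_unity[OF l] by (simp add: bij_betw_def)
  have "cis (2 * pi * real (m mod l) / real l) = cis (2 * pi * real 0 / real l)"
    using h zeta_pow_mod[OF l, of m] zeta_pow[OF l, of "m mod l"] by simp
  hence "m mod l = 0" by (rule inj_onD[OF inj]) (use l in auto)
  thus "l dvd m" by (simp add: dvd_eq_mod_eq_0)
next
  assume l: "l > 0" and "l dvd m"
  then obtain k where "m = l * k" by blast
  thus "zeta l ^ m = 1" using zeta_pow_l[OF l] by (simp add: power_mult)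
qed

lemma zeta_pow_inj:
  assumes "prime l" "\<not> l dvd j" "a < l" "b < l" "(zeta l ^ j) ^ a = (zeta l ^ j) ^ b"
  shows "a = b"
proof (rule ccontr)
  have l: "l > 0" using assms(1) prime_gt_0_nat by blast
  have z0: "zeta l \<noteq> 0" by (simp add: zeta_def)
  assume "a \<noteq> b"
  then consider "a < b" | "b < a" by linarith
  then obtain d where d: "0 < d" "d < l" "(zeta l ^ j) ^ d = 1"
  proof cases
    case 1
    have "(zeta l ^ j) ^ b = (zeta l ^ j) ^ a * (zeta l ^ j) ^ (b - a)" using 1 by (simp add: power_add[symmetric])
    hence "(zeta l ^ j) ^ (b - a) = 1" using assms(5) z0 by simp
    thus ?thesis using that[of "b - a"] 1 assms by simp
  next
    case 2
    have "(zeta l ^ j) ^ a = (zeta l ^ j) ^ b * (zeta l ^ j) ^ (a - b)" using 2 by (simp add: power_add[symmetric])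
    hence "(zeta l ^ j) ^ (a - b) = 1" using assms(5) z0 by simp
    thus ?thesis using that[of "a - b"] 2 assms by simp
  qed
  hence "zeta l ^ (j * d) = 1" by (simp add: power_mult)
  hence "l dvd j * d" using zeta_pow_eq_1[OF l] by simp
  hence "l dvd d" using assms(1,2) prime_dvd_mult_iff by blast
  thus False using d by (simp add: nat_dvd_not_less)
qed

lemma zeta_prim:
  assumes "prime l" "\<not> l dvd j"
  shows "(zeta l ^ j) ^ l = 1" "zeta l ^ j \<noteq> 1"
proof -
  have l: "l > 0" using assms(1) prime_gt_0_nat by blast
  have "(zeta l ^ j) ^ l = (zeta l ^ l) ^ j" by (simp only: power_mult[symmetric] mult.commute)
  thus "(zeta l ^ j) ^ l = 1" using zeta_pow_l[OF l] by simp
  show "zeta l ^ j \<noteq> 1" using zeta_pow_eq_1[OF l, of j] assms by simp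
qed

lemma geom_roots_zero:
  assumes "w ^ l = 1" "w \<noteq> (1::complex)"
  shows "(\<Sum>i<l. w ^ i) = 0"
  using assms by (simp add: geometric_sum)

lemma sum_zeta_powers:
  assumes "l > 0"
  shows "(\<Sum>j<l. (zeta l ^ j) ^ i) = (if l dvd i then of_nat l else 0)"
proof -
  have "(\<Sum>j<l. (zeta l ^ j) ^ i) = (\<Sum>j<l. (zeta l ^ i) ^ j)" by (simp add: power_mult[symmetric] mult.commute)
  also have "\<dots> = (if l dvd i then of_nat l else 0)"
  proof (cases "l dvd i")
    case True
    hence "zeta l ^ i = 1" using zeta_pow_eq_1[OF assms] by simp
    thus ?thesis using True by simp
  next
    case False
    hence "zeta l ^ i \<noteq> 1" using zeta_pow_eq_1[OF assms] by simp
    moreover have "(zeta l ^ i) ^ l = (zeta l ^ l) ^ i" by (simp only: power_mult[symmetric] mult.commute)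
    hence "(zeta l ^ i) ^ l = 1" using zeta_pow_l[OF assms] by simp
    ultimately show ?thesis using False geom_roots_zero by simp
  qed
  finally show ?thesis .
qed

definition ip :: "complex poly \<Rightarrow> bool" where "ip P \<longleftrightarrow> (\<forall>i. coeff P i \<in> \<int>)"

lemma ip_add: "ip P \<Longrightarrow> ip Q \<Longrightarrow> ip (P + Q)" by (simp add: ip_def)
lemma ip_diff: "ip P \<Longrightarrow> ip Q \<Longrightarrow> ip (P - Q)" by (simp add: ip_def)
lemma ip_minus: "ip P \<Longrightarrow> ip (- P)" by (simp add: ip_def)
lemma ip_mult: "ip P \<Longrightarrow> ip Q \<Longrightarrow> ip (P * Q)" unfolding ip_def coeff_mult by auto
lemma ip_1: "ip 1" by (simp add: ip_def coeff_1)
lemma ip_pow: "ip P \<Longrightarrow> ip (P ^ k)" by (induction k) (simp_all add: ip_1 ip_mult)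
lemma ip_const: "c \<in> \<int> \<Longrightarrow> ip [:c:]" by (simp add: ip_def coeff_pCons split: nat.split)
lemma ip_0: "ip 0" by (simp add: ip_def)
lemma ip_lin: "a \<in> \<int> \<Longrightarrow> b \<in> \<int> \<Longrightarrow> ip [:a, b:]" by (simp add: ip_def coeff_pCons split: nat.split)
lemma ip_monom: "c \<in> \<int> \<Longrightarrow> ip (monom c k)" by (simp add: ip_def)
lemma ip_sum: "(\<And>x. x \<in> A \<Longrightarrow> ip (f x)) \<Longrightarrow> ip (\<Sum>x\<in>A. f x)"
  unfolding ip_def coeff_sum by auto
lemma ip_prod: "(\<And>x. x \<in> A \<Longrightarrow> ip (f x)) \<Longrightarrow> ip (\<Prod>x\<in>A. f x)"
  by (induction A rule: infinite_finite_induct) (auto simp: ip_1 ip_mult)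
lemma ip_poly_Int: "ip P \<Longrightarrow> x \<in> \<int> \<Longrightarrow> poly P x \<in> \<int>"
  unfolding ip_def poly_altdef by auto

lemma sum_zeta_poly:
  assumes "l > 0" "ip P"
  shows "\<exists>s\<in>\<int>. (\<Sum>j<l. poly P (zeta l ^ j)) = of_nat l * s"
proof -
  have "(\<Sum>j<l. poly P (zeta l ^ j)) = (\<Sum>j<l. \<Sum>i\<le>degree P. coeff P i * (zeta l ^ j) ^ i)"
    by (simp add: poly_altdef)
  also have "\<dots> = (\<Sum>i\<le>degree P. coeff P i * (\<Sum>j<l. (zeta l ^ j) ^ i))"
    by (subst sum.swap) (simp add: sum_distrib_left)
  also have "\<dots> = (\<Sum>i\<le>degree P. coeff P i * (if l dvd i then of_nat l else 0))"
    by (simp add: sum_zeta_powers[OF assms(1)])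
  also have "\<dots> = of_nat l * (\<Sum>i\<le>degree P. if l dvd i then coeff P i else 0)"
    by (simp add: sum_distrib_left if_distrib mult_ac cong: if_cong)
  finally show ?thesis using assms(2) unfolding ip_def by (intro bexI[of _ "\<Sum>i\<le>degree P. if l dvd i then coeff P i else 0"]) auto
qed


lemma prim_pow:
  assumes "prime l" "\<not> l dvd j" "0 < i" "i < l"
  shows "((zeta l ^ j) ^ i) ^ l = 1" "(zeta l ^ j) ^ i \<noteq> 1"
proof -
  have l: "l > 0" using assms(1) prime_gt_0_nat by blast
  have "((zeta l ^ j) ^ i) ^ l = (zeta l ^ l) ^ (j * i)" by (simp only: power_mult[symmetric] mult_ac)
  thus "((zeta l ^ j) ^ i) ^ l = 1" using zeta_pow_l[OF l] by simp
  have "\<not> l dvd j * i" using assms prime_dvd_mult_iff nat_dvd_not_less by blast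
  hence "zeta l ^ (j * i) \<noteq> 1" using zeta_pow_eq_1[OF l] by simp
  thus "(zeta l ^ j) ^ i \<noteq> 1" by (simp add: power_mult)
qed

lemma prod_one_minus:
  assumes pl: "prime l" and nd: "\<not> l dvd j"
  defines "z \<equiv> zeta l ^ j"
  shows "(\<Prod>i\<in>{1..<l}. (1 - z ^ i)) = of_nat l"
proof -
  have l2: "l \<ge> 2" using pl prime_ge_2_nat by blast
  define P where "P = (\<Sum>i<l. monom (1::complex) i)"
  define Q where "Q = (\<Prod>i\<in>{1..<l}. [:- (z ^ i), 1:])"
  have cP: "coeff P k = (if k < l then 1 else 0)" for k
    unfolding P_def coeff_sum by (simp add: coeff_monom)
  have dQ: "degree Q = l - 1"
    unfolding Q_def by (subst degree_prod_sum_eq) auto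
  have lQ: "lead_coeff Q = 1"
    unfolding Q_def by (simp add: lead_coeff_prod)
  have cD: "coeff (P - Q) k = 0" if "k \<ge> l - 1" for k
  proof (cases "k = l - 1")
    case True
    then show ?thesis using cP lQ dQ l2 by simp
  next
    case False
    hence "k > degree Q" "\<not> k < l" using that dQ by auto
    thus ?thesis using cP coeff_eq_0 by simp
  qed
  have dD: "degree (P - Q) \<le> l - 2"
    by (rule degree_le) (use cD in auto)
  define R where "R = (\<lambda>i. z ^ i) ` {1..<l}"
  have cR: "card R = l - 1"
    unfolding R_def
  proof (subst card_image)
    show "inj_on (\<lambda>i. z ^ i) {1..<l}"
      by (rule inj_onI) (use zeta_pow_inj[OF pl nd] in \<open>auto simp: z_def\<close>)
  qed simp
  have Rroots: "R \<subseteq> {x. poly (P - Q) x = 0}"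
  proof
    fix w assume "w \<in> R"
    then obtain i where i0: "i \<in> {1..<l}" "w = z ^ i" unfolding R_def by blast
    hence i: "0 < i" "i < l" "w = z ^ i" by auto
    have pw: "poly P w = 0"
      using geom_roots_zero[of w l] prim_pow[OF pl nd i(1,2)] i(3) unfolding P_def z_def
      by (simp add: poly_sum poly_monom)
    have "poly Q w = 0" unfolding Q_def poly_prod
      by (rule prod_zero) (use i in \<open>auto intro!: bexI[of _ i]\<close>)
    thus "w \<in> {x. poly (P - Q) x = 0}" using pw by simp
  qed
  have "P - Q = 0"
  proof (rule ccontr)
    assume ne: "P - Q \<noteq> 0"
    have "card R \<le> card {x. poly (P - Q) x = 0}"
      by (rule card_mono[OF poly_roots_finite[OF ne] Rroots])
    also have "\<dots> \<le> degree (P - Q)" by (rule card_poly_roots_bound[OF ne])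
    finally show False using dD cR l2 by linarith
  qed
  hence "poly P 1 = poly Q 1" by simp
  moreover have "poly P 1 = of_nat l" unfolding P_def by (simp add: poly_sum poly_monom)
  moreover have "poly Q 1 = (\<Prod>i\<in>{1..<l}. (1 - z ^ i))" unfolding Q_def by (simp add: poly_prod)
  ultimately show ?thesis by simp
qed

definition Ep :: "nat \<Rightarrow> complex poly" where
  "Ep l = (\<Prod>i\<in>{1..<l}. (\<Sum>t<i. monom 1 t))"

lemma ip_Ep: "ip (Ep l)"
  unfolding Ep_def by (intro ip_prod ip_sum ip_monom) simp

lemma Ep_eq:
  assumes "prime l" "\<not> l dvd j"
  shows "(1 - zeta l ^ j) ^ (l - 1) * poly (Ep l) (zeta l ^ j) = of_nat l"
proof -
  define z where "z = zeta l ^ j"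
  have "(1 - z) ^ (l - 1) * poly (Ep l) z = (\<Prod>i\<in>{1..<l}. (1 - z) * (\<Sum>t<i. z ^ t))"
    unfolding Ep_def poly_prod by (simp add: prod.distrib poly_sum poly_monom)
  also have "\<dots> = (\<Prod>i\<in>{1..<l}. (1 - z ^ i))"
    by (rule prod.cong[OF refl]) (simp add: one_diff_power_eq)
  also have "\<dots> = of_nat l" unfolding z_def by (rule prod_one_minus[OF assms])
  finally show ?thesis by (simp add: z_def)
qed


definition Dd :: "nat \<Rightarrow> complex \<Rightarrow> complex" where "Dd q z = (1 - z) ^ 2 + 4 * of_nat q * z"
definition mu1 :: "nat \<Rightarrow> complex \<Rightarrow> complex" where "mu1 q z = ((1 - z) + csqrt (Dd q z)) / 2"
definition mu2 :: "nat \<Rightarrow> complex \<Rightarrow> complex" where "mu2 q z = ((1 - z) - csqrt (Dd q z)) / 2"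

lemma mu1_eq: "mu1 q z ^ 2 = (1 - z) * mu1 q z + of_nat q * z"
proof -
  have r: "csqrt (Dd q z) ^ 2 = (1 - z) ^ 2 + 4 * of_nat q * z" by (simp add: Dd_def)
  have r': "csqrt (Dd q z) * csqrt (Dd q z) = 1 - 2 * z + z * z + 4 * of_nat q * z"
    using r by (simp add: power2_eq_square algebra_simps)
  show ?thesis unfolding mu1_def by (simp add: power2_eq_square field_simps r')
qed

lemma mu2_eq: "mu2 q z ^ 2 = (1 - z) * mu2 q z + of_nat q * z"
proof -
  have r: "csqrt (Dd q z) ^ 2 = (1 - z) ^ 2 + 4 * of_nat q * z" by (simp add: Dd_def)
  have r': "csqrt (Dd q z) * csqrt (Dd q z) = 1 - 2 * z + z * z + 4 * of_nat q * z"
    using r by (simp add: power2_eq_square algebra_simps)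
  show ?thesis unfolding mu2_def by (simp add: power2_eq_square field_simps r')
qed

lemma Dd_ne0:
  assumes "cmod z = 1" "q > 1"
  shows "Dd q z \<noteq> 0"
proof -
  have zc: "z * cnj z = 1" using assms(1) complex_norm_square[of z] by (simp add: complex_mult_cnj[symmetric])
  have "Dd q z = z * (cnj z + z - 2 + 4 * of_nat q)"
    unfolding Dd_def using zc by (simp add: power2_eq_square algebra_simps)
  moreover have "z \<noteq> 0" using assms(1) by auto
  moreover have "cnj z + z - 2 + 4 * of_nat q \<noteq> 0"
  proof -
    have "Re (cnj z + z - 2 + 4 * of_nat q) = 2 * Re z - 2 + 4 * real q" by simp
    moreover have "Re z \<ge> -1" using abs_Re_le_cmod[of z] assms(1) by linarith
    moreover have "real q \<ge> 2" using assms(2) by simp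
    ultimately have gt: "Re (cnj z + z - 2 + 4 * of_nat q) > 0" by linarith
    show ?thesis
    proof
      assume "cnj z + z - 2 + 4 * of_nat q = 0"
      hence "Re (cnj z + z - 2 + 4 * of_nat q) = 0" by simp
      with gt show False by simp
    qed
  qed
  ultimately show ?thesis by simp
qed

lemma mu_ne: "cmod z = 1 \<Longrightarrow> q > 1 \<Longrightarrow> mu1 q z \<noteq> mu2 q z"
  using Dd_ne0 by (auto simp: mu1_def mu2_def)

lemma ip_pCons: "c \<in> \<int> \<Longrightarrow> ip P \<Longrightarrow> ip (pCons c P)"
  by (simp add: ip_def coeff_pCons split: nat.split)
lemma ip_smult: "c \<in> \<int> \<Longrightarrow> ip P \<Longrightarrow> ip (smult c P)"
  by (simp add: ip_def)

fun Up :: "nat \<Rightarrow> nat \<Rightarrow> complex poly" where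
  "Up q 0 = 0"
| "Up q (Suc 0) = 1"
| "Up q (Suc (Suc k)) = [:1, -1:] * Up q (Suc k) + [:0, of_nat q:] * Up q k"

lemma ip_Up: "ip (Up q k)"
  by (induction q k rule: Up.induct) (auto intro!: ip_add ip_mult ip_lin ip_pCons ip_smult ip_minus simp: ip_0 ip_1)

lemma Up_closed:
  assumes e1: "m1 ^ 2 = (1 - z) * m1 + of_nat q * z" and e2: "m2 ^ 2 = (1 - z) * m2 + of_nat q * z"
  shows "poly (Up q k) z * (m1 - m2) = m1 ^ k - m2 ^ k"
proof -
  have "poly (Up q k) z * (m1 - m2) = m1 ^ k - m2 ^ k \<and>
        poly (Up q (Suc k)) z * (m1 - m2) = m1 ^ Suc k - m2 ^ Suc k"
  proof (induction k)
    case 0 then show ?case by simp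
  next
    case (Suc k)
    have "poly (Up q (Suc (Suc k))) z * (m1 - m2) =
          (1 - z) * (poly (Up q (Suc k)) z * (m1 - m2)) + of_nat q * z * (poly (Up q k) z * (m1 - m2))"
      by (simp add: algebra_simps)
    also have "\<dots> = (1 - z) * (m1 ^ Suc k - m2 ^ Suc k) + of_nat q * z * (m1 ^ k - m2 ^ k)"
      using Suc.IH by simp
    also have "\<dots> = m1 ^ k * ((1 - z) * m1 + of_nat q * z) - m2 ^ k * ((1 - z) * m2 + of_nat q * z)"
      by (simp add: algebra_simps)
    also have "\<dots> = m1 ^ k * m1 ^ 2 - m2 ^ k * m2 ^ 2" using e1 e2 by simp
    also have "\<dots> = m1 ^ Suc (Suc k) - m2 ^ Suc (Suc k)" by (simp add: power2_eq_square)
    finally show ?case using Suc.IH by simp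
  qed
  thus ?thesis by simp
qed


lemma cmod_zeta_pow: "cmod (zeta l ^ j) = 1"
  by (simp add: zeta_def norm_power)

lemma sum_split0:
  fixes l :: nat
  assumes "l > 0"
  shows "(\<Sum>j<l. f j) = f 0 + (\<Sum>j\<in>{1..<l}. f j)"
proof -
  have "{..<l} = insert 0 {1..<l}" using assms by (auto simp: not_le)
  thus ?thesis by simp
qed

lemma UpA: "\<exists>R. ip R \<and> (\<forall>z. poly (Up q (Suc k)) z = (1 - z) ^ k + of_nat q * poly R z)"
proof -
  define P where "P k \<longleftrightarrow> (\<exists>R. ip R \<and> (\<forall>z. poly (Up q (Suc k)) z = (1 - z) ^ k + of_nat q * poly R z))" for k
  have "P k \<and> P (Suc k)"
  proof (induction k)
    case 0
    have "P 0" unfolding P_def by (intro exI[of _ 0]) (simp add: ip_0)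
    moreover have "P 1" unfolding P_def by (intro exI[of _ 0]) (simp add: ip_0)
    ultimately show ?case by simp
  next
    case (Suc k)
    then obtain R1 R2 where R1: "ip R1" "\<And>z. poly (Up q (Suc k)) z = (1 - z) ^ k + of_nat q * poly R1 z"
      and R2: "ip R2" "\<And>z. poly (Up q (Suc (Suc k))) z = (1 - z) ^ Suc k + of_nat q * poly R2 z"
      unfolding P_def by blast
    define R where "R = [:1, -1:] * R2 + [:0, 1:] * [:1, -1:] ^ k + smult (of_nat q) ([:0, 1:] * R1)"
    have "ip R" unfolding R_def
      by (intro ip_add ip_mult ip_pow ip_smult ip_lin R1 R2) auto
    moreover have "poly (Up q (Suc (Suc (Suc k)))) z = (1 - z) ^ Suc (Suc k) + of_nat q * poly R z" for z
    proof -
      have "poly (Up q (Suc (Suc (Suc k)))) z = (1 - z) * poly (Up q (Suc (Suc k))) z + of_nat q * z * poly (Up q (Suc k)) z"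
        by (simp add: algebra_simps)
      also have "\<dots> = (1 - z) * ((1 - z) ^ Suc k + of_nat q * poly R2 z) + of_nat q * z * ((1 - z) ^ k + of_nat q * poly R1 z)"
        by (simp only: R1(2) R2(2))
      also have "\<dots> = (1 - z) ^ Suc (Suc k) + of_nat q * poly R z"
        unfolding R_def by (simp add: algebra_simps)
      finally show ?thesis .
    qed
    ultimately have "P (Suc (Suc k))" unfolding P_def by blast
    with Suc show ?case by simp
  qed
  thus ?thesis unfolding P_def by blast
qed

lemma UpB:
  assumes hq: "\<And>z. z \<in> Z \<Longrightarrow> of_nat q * z = (1 - z) ^ 2 * poly Cp z"
    and ipC: "ip Cp" and C1: "poly Cp 1 = 0"
  shows "\<exists>W. ip W \<and> poly W 1 = 1 \<and> (\<forall>z\<in>Z. poly (Up q (Suc k)) z = (1 - z) ^ k * poly W z)"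
proof -
  define P where "P k \<longleftrightarrow> (\<exists>W. ip W \<and> poly W 1 = 1 \<and> (\<forall>z\<in>Z. poly (Up q (Suc k)) z = (1 - z) ^ k * poly W z))" for k
  have "P k \<and> P (Suc k)"
  proof (induction k)
    case 0
    have "P 0" unfolding P_def by (intro exI[of _ 1]) (simp add: ip_1)
    moreover have "P 1" unfolding P_def by (intro exI[of _ 1]) (simp add: ip_1)
    ultimately show ?case by simp
  next
    case (Suc k)
    then obtain W1 W2 where W1: "ip W1" "poly W1 1 = 1" "\<And>z. z \<in> Z \<Longrightarrow> poly (Up q (Suc k)) z = (1 - z) ^ k * poly W1 z"
      and W2: "ip W2" "poly W2 1 = 1" "\<And>z. z \<in> Z \<Longrightarrow> poly (Up q (Suc (Suc k))) z = (1 - z) ^ Suc k * poly W2 z"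
      unfolding P_def by blast
    define W where "W = W2 + Cp * W1"
    have "ip W" unfolding W_def by (intro ip_add ip_mult W1 W2 ipC)
    moreover have "poly W 1 = 1" unfolding W_def using W2(2) C1 by simp
    moreover have "poly (Up q (Suc (Suc (Suc k)))) z = (1 - z) ^ Suc (Suc k) * poly W z" if z: "z \<in> Z" for z
    proof -
      have "poly (Up q (Suc (Suc (Suc k)))) z = (1 - z) * poly (Up q (Suc (Suc k))) z + (of_nat q * z) * poly (Up q (Suc k)) z"
        by (simp add: algebra_simps)
      also have "\<dots> = (1 - z) * ((1 - z) ^ Suc k * poly W2 z) + ((1 - z) ^ 2 * poly Cp z) * ((1 - z) ^ k * poly W1 z)"
        by (simp only: W1(3)[OF z] W2(3)[OF z] hq[OF z])
      also have "\<dots> = (1 - z) ^ Suc (Suc k) * poly W z"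
        unfolding W_def by (simp add: algebra_simps power2_eq_square)
      finally show ?thesis .
    qed
    ultimately have "P (Suc (Suc k))" unfolding P_def by blast
    with Suc show ?case by simp
  qed
  thus ?thesis unfolding P_def by blast
qed


lemma zeta_ne1: "prime l \<Longrightarrow> zeta l \<noteq> 1"
  using zeta_pow_eq_1[of l 1] prime_gt_1_nat[of l] by auto

lemma sum_zeta_nonzero:
  assumes "prime l"
  shows "(\<Sum>j\<in>{1..<l}. zeta l ^ j) = -1"
proof -
  have l: "l > 0" using assms prime_gt_0_nat by blast
  have "(\<Sum>j<l. zeta l ^ j) = 0"
    using geom_roots_zero[of "zeta l" l] zeta_pow_l[OF l] zeta_ne1[OF assms] by simp
  thus ?thesis using sum_split0[OF l, of "\<lambda>j. zeta l ^ j"] by (simp add: eq_neg_iff_add_eq_0 add.commute)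
qed

lemma good_root:
  assumes pl: "prime l" and q1: "q > 1" and cs: "\<not> l dvd q \<or> (\<exists>m. q = l ^ m \<and> m * (l - 1) \<ge> 3)"
  shows "\<exists>j. 0 < j \<and> j < l \<and> (\<forall>k>0. mu1 q (zeta l ^ j) ^ k \<noteq> mu2 q (zeta l ^ j) ^ k)"
proof (rule ccontr)
  assume H: "\<not> ?thesis"
  have l0: "l > 0" using pl prime_gt_0_nat by blast
  have l1: "l > 1" using pl prime_gt_1_nat by blast
  have "\<forall>j\<in>{1..<l}. \<exists>k. k > 0 \<and> mu1 q (zeta l ^ j) ^ k = mu2 q (zeta l ^ j) ^ k"
    using H by auto
  then obtain kk where kk: "\<And>j. j \<in> {1..<l} \<Longrightarrow> kk j > 0 \<and> mu1 q (zeta l ^ j) ^ kk j = mu2 q (zeta l ^ j) ^ kk j"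
    by metis
  define K where "K = (\<Prod>j\<in>{1..<l}. kk j)"
  have K0: "K > 0" unfolding K_def using kk by (intro prod_pos) auto
  have ndj: "\<not> l dvd j" if "j \<in> {1..<l}" for j using that by (auto dest: nat_dvd_not_less)
  have UK: "poly (Up q K) (zeta l ^ j) = 0" if j: "j \<in> {1..<l}" for j
  proof -
    have "kk j dvd K" unfolding K_def using j by (intro dvd_prodI) auto
    then obtain t where t: "K = kk j * t" by blast
    have "mu1 q (zeta l ^ j) ^ K = mu2 q (zeta l ^ j) ^ K"
      unfolding t power_mult using kk[OF j] by simp
    moreover have "mu1 q (zeta l ^ j) \<noteq> mu2 q (zeta l ^ j)" by (rule mu_ne[OF cmod_zeta_pow q1])
    ultimately show ?thesis
      using Up_closed[OF mu1_eq[of q "zeta l ^ j"] mu2_eq[of q "zeta l ^ j"], of K] by simp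
  qed
  obtain k0 where k0: "K = Suc k0" using K0 gr0_implies_Suc by blast
  from cs show False
  proof
    assume nd: "\<not> l dvd q"
    obtain R where R: "ip R" "\<And>z. poly (Up q (Suc k0)) z = (1 - z) ^ k0 + of_nat q * poly R z"
      using UpA[of q k0] by blast
    define Gp where "Gp = [:0, 1:] * R * [:1, -1:] ^ ((l - 2) * k0) * Ep l ^ k0"
    have ipG: "ip Gp" unfolding Gp_def by (intro ip_mult ip_pow ip_lin R ip_Ep) auto
    have key: "zeta l ^ j * of_nat l ^ k0 = - of_nat q * poly Gp (zeta l ^ j)" if j: "j \<in> {1..<l}" for j
    proof -
      define z where "z = zeta l ^ j"
      have E: "(1 - z) ^ (l - 1) * poly (Ep l) z = of_nat l" unfolding z_def by (rule Ep_eq[OF pl ndj[OF j]])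
      have U0: "(1 - z) ^ k0 = - of_nat q * poly R z"
        using UK[OF j] R(2)[of z] k0 unfolding z_def by (simp add: eq_neg_iff_add_eq_0)
      have "of_nat l ^ k0 = ((1 - z) ^ (l - 1) * poly (Ep l) z) ^ k0" using E by simp
      also have "\<dots> = (1 - z) ^ k0 * ((1 - z) ^ ((l - 2) * k0) * poly (Ep l) z ^ k0)"
      proof -
        have "(l - 1) * k0 = k0 + (l - 2) * k0" using l1 by (simp add: algebra_simps)
        thus ?thesis by (simp add: power_mult_distrib power_mult[symmetric] power_add mult_ac)
      qed
      also have "\<dots> = - of_nat q * (poly R z * (1 - z) ^ ((l - 2) * k0) * poly (Ep l) z ^ k0)"
        by (simp add: U0)
      finally have "of_nat l ^ k0 = - of_nat q * (poly R z * (1 - z) ^ ((l - 2) * k0) * poly (Ep l) z ^ k0)" .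
      hence "z * of_nat l ^ k0 = - of_nat q * (z * poly R z * (1 - z) ^ ((l - 2) * k0) * poly (Ep l) z ^ k0)"
        by (simp add: mult_ac)
      thus ?thesis unfolding z_def Gp_def by (simp add: mult_ac)
    qed
    obtain s where s: "s \<in> \<int>" "(\<Sum>j<l. poly Gp (zeta l ^ j)) = of_nat l * s"
      using sum_zeta_poly[OF l0 ipG] by blast
    have G1: "poly Gp 1 \<in> \<int>" by (rule ip_poly_Int[OF ipG]) simp
    have "(\<Sum>j\<in>{1..<l}. zeta l ^ j * of_nat l ^ k0) = (\<Sum>j\<in>{1..<l}. - of_nat q * poly Gp (zeta l ^ j))"
      by (rule sum.cong[OF refl]) (rule key)
    moreover have "(\<Sum>j\<in>{1..<l}. zeta l ^ j * of_nat l ^ k0) = - (of_nat l ^ k0)"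
      using sum_zeta_nonzero[OF pl] by (simp add: sum_distrib_right[symmetric])
    moreover have "(\<Sum>j\<in>{1..<l}. - of_nat q * poly Gp (zeta l ^ j)) = - of_nat q * (\<Sum>j\<in>{1..<l}. poly Gp (zeta l ^ j))"
      by (simp add: sum_distrib_left)
    ultimately have "- (of_nat l ^ k0) = - of_nat q * (\<Sum>j\<in>{1..<l}. poly Gp (zeta l ^ j))" by simp
    also have "(\<Sum>j\<in>{1..<l}. poly Gp (zeta l ^ j)) = of_nat l * s - poly Gp 1"
      using sum_split0[OF l0, of "\<lambda>j. poly Gp (zeta l ^ j)"] s(2) by simp
    finally have eq: "of_nat (l ^ k0) = of_nat q * (of_nat l * s - poly Gp 1)" by simp
    have "of_nat l * s - poly Gp 1 \<in> \<int>" using s(1) G1 by simp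
    then obtain w where w: "of_nat l * s - poly Gp 1 = of_int w" by (elim Ints_cases)
    have "of_int (int (l ^ k0)) = (of_int (int q * w) :: complex)" using eq w by simp
    hence "int (l ^ k0) = int q * w" by (simp only: of_int_eq_iff)
    hence "int q dvd int (l ^ k0)" by simp
    hence qd: "q dvd l ^ k0" by (simp only: of_nat_dvd_iff)
    have "coprime l q" using pl nd by (simp add: prime_imp_coprime)
    hence "coprime q (l ^ k0)" by (simp add: coprime_commute)
    hence "gcd q (l ^ k0) = 1" by simp
    moreover have "gcd q (l ^ k0) = q" using qd by (simp add: gcd_nat.absorb1)
    ultimately show False using q1 by simp
  next
    assume "\<exists>m. q = l ^ m \<and> m * (l - 1) \<ge> 3"
    then obtain m where qm: "q = l ^ m" and m3: "m * (l - 1) \<ge> 3" by blast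
    define Cp where "Cp = [:0, 1:] * [:1, -1:] ^ (m * (l - 1) - 2) * Ep l ^ m"
    have ipC: "ip Cp" unfolding Cp_def by (intro ip_mult ip_pow ip_lin ip_Ep) auto
    have C1: "poly Cp 1 = 0" unfolding Cp_def using m3 by simp
    define Z where "Z = (\<lambda>j. zeta l ^ j) ` {1..<l}"
    have hq: "of_nat q * z = (1 - z) ^ 2 * poly Cp z" if "z \<in> Z" for z
    proof -
      obtain j where j: "j \<in> {1..<l}" "z = zeta l ^ j" using \<open>z \<in> Z\<close> unfolding Z_def by blast
      have E: "(1 - z) ^ (l - 1) * poly (Ep l) z = of_nat l" unfolding j(2) by (rule Ep_eq[OF pl ndj[OF j(1)]])
      have "of_nat q = ((1 - z) ^ (l - 1) * poly (Ep l) z) ^ m" using E qm by simp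
      also have "\<dots> = (1 - z) ^ (m * (l - 1)) * poly (Ep l) z ^ m"
        by (simp add: power_mult_distrib power_mult[symmetric] mult.commute)
      also have "m * (l - 1) = 2 + (m * (l - 1) - 2)" using m3 by simp
      finally have "of_nat q = (1 - z) ^ 2 * ((1 - z) ^ (m * (l - 1) - 2) * poly (Ep l) z ^ m)"
        by (simp only: power_add mult.assoc)
      thus ?thesis unfolding Cp_def by (simp add: mult_ac)
    qed
    obtain W where W: "ip W" "poly W 1 = 1" "\<And>z. z \<in> Z \<Longrightarrow> poly (Up q (Suc k0)) z = (1 - z) ^ k0 * poly W z"
      using UpB[OF hq ipC C1, where k=k0] by blast
    have W0: "poly W (zeta l ^ j) = 0" if j: "j \<in> {1..<l}" for j
    proof -
      have "zeta l ^ j \<in> Z" unfolding Z_def using j by blast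
      hence "(1 - zeta l ^ j) ^ k0 * poly W (zeta l ^ j) = 0" using W(3) UK[OF j] k0 by simp
      moreover have "1 - zeta l ^ j \<noteq> 0" using zeta_prim(2)[OF pl ndj[OF j]] by simp
      ultimately show ?thesis by simp
    qed
    obtain s where s: "s \<in> \<int>" "(\<Sum>j<l. poly W (zeta l ^ j)) = of_nat l * s"
      using sum_zeta_poly[OF l0 W(1)] by blast
    have "(\<Sum>j<l. poly W (zeta l ^ j)) = 1"
      using sum_split0[OF l0, of "\<lambda>j. poly W (zeta l ^ j)"] W0 W(2) by simp
    with s(2) have "of_nat l * s = 1" by simp
    moreover obtain w where "s = of_int w" using s(1) by (elim Ints_cases)
    ultimately have "of_int (int l * w) = (of_int 1 :: complex)" by simp
    hence "int l * w = 1" by (simp only: of_int_eq_iff)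
    hence "int l dvd 1" by (metis dvd_triv_left)
    hence "l dvd 1" by simp
    thus False using l1 by simp
  qed
qed


lemma coeff_lin_pow: "coeff ([:1, a:] ^ n) 0 = 1 \<and> coeff ([:1, a:] ^ n) 1 = of_nat n * (a :: complex)"
  by (induction n) (auto simp: mult_pCons_left coeff_pCons algebra_simps split: nat.split)

context fsd_div
begin

lemma q_def': "q = card (UNIV :: 'a set)" by (rule q_def)

lemma case_cond: "\<not> l dvd q \<or> (\<exists>m. q = l ^ m \<and> m * (l - 1) \<ge> 3)"
proof (cases "l dvd q")
  case True
  obtain k where k: "q = CHAR('a) ^ k" using field_card_prime_power[where ?'a='a] q_def by metis
  have pc: "prime CHAR('a)" by (rule CHAR_field_prime)
  have "k > 0" using k q_gt by (cases k) auto
  have "l dvd CHAR('a)" using True k l_prime prime_dvd_power by metis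
  hence "l = CHAR('a)" using l_prime pc primes_dvd_imp_eq by blast
  hence qk: "q = l ^ k" using k by simp
  have l2: "l \<ge> 2" using l_prime prime_ge_2_nat by blast
  have "k * (l - 1) \<ge> 3"
  proof (cases "k \<ge> 3")
    case True thus ?thesis using l2 by (metis le_trans mult_le_mono less_one not_less diff_is_0_eq mult.right_neutral
          Suc_le_eq numeral_2_eq_2 one_le_numeral zero_less_diff one_add_one le_add_diff_inverse2)
  next
    case False
    then consider "k = 1" | "k = 2" using \<open>k > 0\<close> by linarith
    thus ?thesis
    proof cases
      case 1 hence "l > 4" using qk q_gt by simp
      thus ?thesis using 1 by simp
    next
      case 2
      have "l \<noteq> 2" using qk q_gt 2 by auto
      hence "l \<ge> 3" using l2 by simp
      thus ?thesis using 2 by simp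
    qed
  qed
  thus ?thesis using qk by blast
qed simp

lemma q1: "q > 1" using q_gt by simp

lemma roots_quad:
  obtains z where "z ^ l = 1" "cmod z = 1"
    "\<And>t. Wc 1 t = 0 \<Longrightarrow> aa * z * t ^ 2 + (1 + z) * t - 1 = 0"
    "l = 2 \<Longrightarrow> z = -1"
proof -
  obtain j where j: "0 < j" "j < l" "\<And>k. k > 0 \<Longrightarrow> mu1 q (zeta l ^ j) ^ k \<noteq> mu2 q (zeta l ^ j) ^ k"
    using good_root[OF l_prime q1 case_cond] by blast
  define z where "z = zeta l ^ j"
  have nd: "\<not> l dvd j" using j by (auto dest: nat_dvd_not_less)
  have zl: "z ^ l = 1" unfolding z_def by (rule zeta_prim(1)[OF l_prime nd])
  have zc: "cmod z = 1" unfolding z_def by (rule cmod_zeta_pow)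
  have quad: "aa * z * t ^ 2 + (1 + z) * t - 1 = 0" if t: "Wc 1 t = 0" for t
  proof -
    have r: "t = (mu1 q z - 1) / (aa * z) \<or> t = (mu2 q z - 1) / (aa * z)"
      by (rule roots_eigen[OF zl mu_ne[OF zc q1] mu1_eq mu2_eq _ t]) (use j(3) in \<open>simp add: z_def\<close>)
    have z0: "z \<noteq> 0" using zc by auto
    have azne: "aa * z \<noteq> 0" using z0 aa_ne0 by simp
    have gen: "aa * z * t ^ 2 + (1 + z) * t - 1 = 0" if tm: "t = (m - 1) / (aa * z)" and em: "m ^ 2 = (1 - z) * m + of_nat q * z" for m
    proof -
      have "aa * z * (aa * z * t ^ 2 + (1 + z) * t - 1) = (aa * z * t) ^ 2 + (1 + z) * (aa * z * t) - aa * z"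
        by (simp add: power2_eq_square algebra_simps)
      also have "aa * z * t = m - 1" using tm azne by simp
      also have "(m - 1) ^ 2 + (1 + z) * (m - 1) - aa * z = m ^ 2 - (1 - z) * m - of_nat q * z"
        by (simp add: power2_eq_square algebra_simps)
      also have "\<dots> = 0" using em by simp
      finally show ?thesis using azne by simp
    qed
    from r show ?thesis using gen[OF _ mu1_eq] gen[OF _ mu2_eq] by blast
  qed
  have l2: "l = 2 \<Longrightarrow> z = -1"
  proof -
    assume "l = 2"
    hence "j = 1" using j by simp
    thus "z = -1" using \<open>l = 2\<close> by (simp add: z_def zeta_def complex_eq_iff)
  qed
  show ?thesis using that[OF zl zc quad l2] .
qed

lemma Wc_1_poly: "Wc 1 t = poly (\<Sum>c\<in>C. monom 1 (wt N c)) t"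
  unfolding Wc_def by (simp add: poly_sum poly_monom)

lemma card_C_gt1: "card C > 1"
  using card_C q_gt n_pos by (metis one_less_power less_trans numeral_less_iff one_less_numeral_iff semiring_norm(76) le_eq_less_or_eq less_one not_less)

end

context fsd_div
begin

lemma odd_case_false:
  assumes l2: "l \<noteq> 2"
  shows False
proof -
  obtain z where zl: "z ^ l = 1" and zc: "cmod z = 1"
    and quad: "\<And>t. Wc 1 t = 0 \<Longrightarrow> aa * z * t ^ 2 + (1 + z) * t - 1 = 0"
    using roots_quad by metis
  have l3: "l \<ge> 3" using l_prime l2 prime_ge_2_nat[of l] by linarith
  have l0: "l > 0" using l3 by simp
  define w where "w = zeta l"
  have wl: "w ^ l = 1" unfolding w_def by (rule zeta_pow_l[OF l0])
  have w2l: "(w ^ 2) ^ l = 1" using wl by (metis power_mult mult.commute power_one)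
  have w1: "w \<noteq> 1" using zeta_pow_eq_1[OF l0, of 1] l3 unfolding w_def by auto
  have "\<not> l dvd 2" using l3 by (auto dest: dvd_imp_le)
  hence w21: "w ^ 2 \<noteq> 1" using zeta_pow_eq_1[OF l0, of 2] unfolding w_def by auto
  have w0: "w \<noteq> 0" unfolding w_def zeta_def by simp
  have noroot: "Wc 1 t \<noteq> 0" for t
  proof
    assume t: "Wc 1 t = 0"
    have t0: "t \<noteq> 0" using t Wc_10 by auto
    have t1: "Wc 1 (w * t) = 0" using t Wc_rot[OF wl] by simp
    have t2: "Wc 1 (w ^ 2 * t) = 0" using t Wc_rot[OF w2l] by simp
    have z0: "z \<noteq> 0" using zc by auto
    have Q0: "aa * z * t ^ 2 + (1 + z) * t - 1 = 0" by (rule quad[OF t])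
    have Q1: "aa * z * (w * t) ^ 2 + (1 + z) * (w * t) - 1 = 0" by (rule quad[OF t1])
    have Q2: "aa * z * (w ^ 2 * t) ^ 2 + (1 + z) * (w ^ 2 * t) - 1 = 0" by (rule quad[OF t2])
    have "(1 - w) * t * (aa * z * t * (1 + w) + (1 + z)) = 0"
    proof -
      have "(1 - w) * t * (aa * z * t * (1 + w) + (1 + z)) =
            (aa * z * t ^ 2 + (1 + z) * t - 1) - (aa * z * (w * t) ^ 2 + (1 + z) * (w * t) - 1)"
        by (simp add: power2_eq_square algebra_simps)
      thus ?thesis using Q0 Q1 by simp
    qed
    hence A: "aa * z * t * (1 + w) + (1 + z) = 0" using w1 t0 by simp
    have "(1 - w ^ 2) * t * (aa * z * t * (1 + w ^ 2) + (1 + z)) = 0"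
    proof -
      have "(1 - w ^ 2) * t * (aa * z * t * (1 + w ^ 2) + (1 + z)) =
            (aa * z * t ^ 2 + (1 + z) * t - 1) - (aa * z * (w ^ 2 * t) ^ 2 + (1 + z) * (w ^ 2 * t) - 1)"
        by (simp add: power2_eq_square algebra_simps)
      thus ?thesis using Q0 Q2 by simp
    qed
    hence B: "aa * z * t * (1 + w ^ 2) + (1 + z) = 0" using w21 t0 by simp
    have "aa * z * t * w * (1 - w) = 0"
    proof -
      have "aa * z * t * w * (1 - w) = (aa * z * t * (1 + w) + (1 + z)) - (aa * z * t * (1 + w ^ 2) + (1 + z))"
        by (simp add: power2_eq_square algebra_simps)
      thus ?thesis using A B by simp
    qed
    thus False using aa_ne0 z0 t0 w0 w1 by simp
  qed
  define Fp where "Fp = (\<Sum>c\<in>C. monom (1::complex) (wt N c))"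
  have "degree Fp = 0"
  proof (rule ccontr)
    assume "degree Fp \<noteq> 0"
    hence "\<not> constant (poly Fp)" by (simp add: constant_degree)
    then obtain t where "poly Fp t = 0" using fundamental_theorem_of_algebra by blast
    thus False using noroot[of t] Wc_1_poly unfolding Fp_def by simp
  qed
  then obtain c where "Fp = [:c:]" by (elim degree_eq_zeroE)
  hence "poly Fp 1 = poly Fp 0" by simp
  hence "Wc 1 1 = Wc 1 0" using Wc_1_poly unfolding Fp_def by simp
  hence "of_nat (card C) = (1 :: complex)" using Wc_11 Wc_10 by simp
  thus False using card_C_gt1 by simp
qed

end

context fsd_div
begin

lemma even_count:
  assumes l2: "l = 2"
  shows "card {c \<in> C. wt N c = 2} = n * (q - 1)"
proof -
  obtain z where quad: "\<And>t. Wc 1 t = 0 \<Longrightarrow> aa * z * t ^ 2 + (1 + z) * t - 1 = 0"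
    and zm: "l = 2 \<Longrightarrow> z = -1"
    using roots_quad by metis
  have z: "z = -1" using zm l2 by simp
  have rt: "aa * t ^ 2 = -1" if "Wc 1 t = 0" for t
    using quad[OF that] z by (simp add: algebra_simps)
  have ev: "wt N c = 2 * (wt N c div 2)" if "c \<in> C" for c
    using l_dvd[OF that] l2 by simp
  define G where "G = (\<Sum>c\<in>C. monom (1::complex) (wt N c div 2))"
  have Gt: "poly G (t ^ 2) = Wc 1 t" for t
    unfolding G_def Wc_def poly_sum poly_monom
  proof (rule sum.cong[OF refl])
    fix c assume c: "c \<in> C"
    show "1 * (t\<^sup>2) ^ (wt N c div 2) = 1 ^ (N - wt N c) * t ^ wt N c"
      by (subst (2) ev[OF c]) (simp add: power_mult)
  qed
  have Groot: "s = - 1 / aa" if "poly G s = 0" for s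
  proof -
    have "Wc 1 (csqrt s) = 0" using that Gt[of "csqrt s"] by simp
    hence "aa * s = -1" using rt by fastforce
    thus ?thesis using aa_ne0 by (simp add: field_simps)
  qed
  have G0: "poly G 0 = 1"
  proof -
    have "poly G 0 = (\<Sum>c\<in>C. if c = (\<lambda>i. 0) then 1 else 0)"
      unfolding G_def poly_sum poly_monom
    proof (rule sum.cong[OF refl])
      fix c assume c: "c \<in> C"
      show "1 * 0 ^ (wt N c div 2) = (if c = (\<lambda>i. 0) then 1 else (0::complex))"
      proof (cases "c = (\<lambda>i. 0)")
        case True thus ?thesis using wt0_in[OF c] by simp
      next
        case False
        hence "wt N c \<noteq> 0" using wt0_in[OF c] by simp
        hence "wt N c div 2 \<noteq> 0" using ev[OF c] by linarith
        thus ?thesis using False by simp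
      qed
    qed
    also have "\<dots> = 1" using finC zero_in by (simp add: sum.delta')
    finally show ?thesis .
  qed
  have G1: "poly G 1 = of_nat q ^ n"
    unfolding G_def poly_sum poly_monom using card_C by simp
  have Gne: "G \<noteq> 0" using G0 by auto
  obtain root where dec: "smult (lead_coeff G) (\<Prod>i<degree G. [:- root i, 1:]) = G"
    using complex_poly_decompose' by blast
  have rooti: "root i = - 1 / aa" if i: "i < degree G" for i
  proof -
    have "poly G (root i) = lead_coeff G * (\<Prod>j<degree G. poly [:- root j, 1:] (root i))"
      by (subst dec[symmetric]) (simp add: poly_prod)
    also have "(\<Prod>j<degree G. poly [:- root j, 1:] (root i)) = 0"
      using i by (intro prod_zero) auto
    finally show ?thesis using Groot by simp
  qed
  define d where "d = degree G"
  define lc where "lc = lead_coeff G"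
  have Gs: "poly G s = lc * (s + 1 / aa) ^ d" for s
  proof -
    have "poly G s = lc * (\<Prod>i<d. poly [:- root i, 1:] s)"
      unfolding lc_def d_def by (subst dec[symmetric]) (simp add: poly_prod)
    also have "(\<Prod>i<d. poly [:- root i, 1:] s) = (\<Prod>i<d. s + 1 / aa)"
      by (rule prod.cong[OF refl]) (simp add: rooti d_def)
    finally show ?thesis by simp
  qed
  have lc1: "lc * (1 / aa) ^ d = 1" using Gs[of 0] G0 by simp
  have Gs2: "poly G s = (1 + aa * s) ^ d" for s
  proof -
    have "s + 1 / aa = (1 / aa) * (1 + aa * s)" using aa_ne0 by (simp add: field_simps)
    hence "poly G s = lc * ((1 / aa) * (1 + aa * s)) ^ d" using Gs[of s] by simp
    also have "\<dots> = (lc * (1 / aa) ^ d) * (1 + aa * s) ^ d" by (simp only: power_mult_distrib mult.assoc)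
    finally have "poly G s = (lc * (1 / aa) ^ d) * (1 + aa * s) ^ d" .
    thus ?thesis using lc1 by simp
  qed
  have "(of_nat q :: complex) ^ d = of_nat q ^ n" using Gs2[of 1] G1 by simp
  hence "of_nat (q ^ d) = (of_nat (q ^ n) :: complex)" by simp
  hence "q ^ d = q ^ n" by (simp only: of_nat_eq_iff)
  hence dn: "d = n" using q_gt by (simp add: power_inject_exp)
  have "poly G = poly ([:1, aa:] ^ n)"
    by (rule ext) (simp add: Gs2 dn mult.commute)
  hence GG: "G = [:1, aa:] ^ n" by (simp add: poly_eq_poly_eq_iff)
  have "coeff G 1 = of_nat n * aa" using coeff_lin_pow[of aa n] GG by simp
  moreover have "coeff G 1 = of_nat (card {c \<in> C. wt N c = 2})"
  proof -
    have "coeff G 1 = (\<Sum>c\<in>C. if wt N c = 2 then 1 else 0)"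
      unfolding G_def coeff_sum coeff_monom
    proof (rule sum.cong[OF refl])
      fix c assume c: "c \<in> C"
      have "wt N c div 2 = 1 \<longleftrightarrow> wt N c = 2" using ev[OF c] by linarith
      thus "(if wt N c div 2 = 1 then 1 else 0) = (if wt N c = 2 then 1 else (0::complex))" by simp
    qed
    also have "\<dots> = of_nat (card {c \<in> C. wt N c = 2})"
      using finC by (simp add: sum.If_cases Int_def conj_commute)
    finally show ?thesis .
  qed
  ultimately have "of_nat (card {c \<in> C. wt N c = 2}) = (of_nat (n * (q - 1)) :: complex)"
    using q_gt by (simp add: of_nat_diff)
  thus ?thesis by (simp only: of_nat_eq_iff)
qed

end

lemma card2_elem:
  assumes "card S = 2" "i \<in> S"
  obtains j where "S = {i, j}" "j \<noteq> i"
proof -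
  obtain x y where xy: "S = {x, y}" "x \<noteq> y" using assms(1) by (auto simp: card_2_iff)
  show ?thesis
  proof (cases "i = x")
    case True thus ?thesis using that[of y] xy by auto
  next
    case False hence "i = y" using assms(2) xy by auto
    thus ?thesis using that[of x] xy by auto
  qed
qed

locale fsd_even = fsd_div +
  assumes l2: "l = 2"
begin

definition supp :: "(nat \<Rightarrow> 'a) \<Rightarrow> nat set" where "supp c = {i. i < N \<and> c i \<noteq> 0}"

lemma wt_supp: "wt N c = card (supp c)" by (simp add: wt_def supp_def)
lemma supp_sub: "supp c \<subseteq> {..<N}" by (auto simp: supp_def)
lemma fin_supp: "finite (supp c)" using supp_sub finite_subset by blast

lemma even_wt: "c \<in> C \<Longrightarrow> even (wt N c)" using l_dvd l2 by fastforce

definition C2 where "C2 = {c \<in> C. wt N c = 2}"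

lemma C2_card: "card C2 = n * (q - 1)" unfolding C2_def by (rule even_count[OF l2])

lemma lin_comb: "u \<in> C \<Longrightarrow> v \<in> C \<Longrightarrow> (\<lambda>k. u k + m * v k) \<in> C"
  using add_in smult_in by blast

lemma vec_zero: "c \<in> C \<Longrightarrow> i \<ge> N \<Longrightarrow> c i = 0"
  using C_sub unfolding vecs_def by blast

lemma two_elems: "card (UNIV :: 'a set) > 2" using q_gt q_def by simp

lemma exists_other: "\<exists>m::'a. m \<noteq> 0 \<and> m \<noteq> x"
proof (rule ccontr)
  assume "\<not> ?thesis"
  hence "UNIV \<subseteq> {0, x}" by auto
  hence "card (UNIV :: 'a set) \<le> card {0, x}" by (intro card_mono) auto
  also have "\<dots> \<le> 2" by (rule card_insert_le_m1) auto
  finally show False using two_elems by simp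
qed

lemma share:
  assumes c: "c \<in> C2" and c': "c' \<in> C2" and i: "i \<in> supp c" "i \<in> supp c'"
  shows "\<exists>m. m \<noteq> 0 \<and> c' = (\<lambda>k. m * c k)"
proof -
  have cC: "c \<in> C" and c'C: "c' \<in> C" using c c' by (auto simp: C2_def)
  have "card (supp c) = 2" using c by (simp add: C2_def wt_supp)
  then obtain j where sc: "supp c = {i, j}" "j \<noteq> i" using i(1) by (rule card2_elem)
  have "card (supp c') = 2" using c' by (simp add: C2_def wt_supp)
  then obtain j' where sc': "supp c' = {i, j'}" "j' \<noteq> i" using i(2) by (rule card2_elem)
  have ci: "c i \<noteq> 0" and c'i: "c' i \<noteq> 0" using i by (auto simp: supp_def)
  have iN: "i < N" using i by (auto simp: supp_def)
  have cj: "c j \<noteq> 0" "j < N" using sc by (auto simp: supp_def set_eq_iff)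
  have c'j: "c' j' \<noteq> 0" "j' < N" using sc' by (auto simp: supp_def set_eq_iff)
  have c0: "c k = 0" if "k \<noteq> i" "k \<noteq> j" for k
  proof (cases "k < N")
    case True thus ?thesis using that sc by (auto simp: supp_def set_eq_iff)
  next
    case False thus ?thesis using vec_zero[OF cC] by simp
  qed
  have c'0: "c' k = 0" if "k \<noteq> i" "k \<noteq> j'" for k
  proof (cases "k < N")
    case True thus ?thesis using that sc' by (auto simp: supp_def set_eq_iff)
  next
    case False thus ?thesis using vec_zero[OF c'C] by simp
  qed
  show ?thesis
  proof (cases "j = j'")
    case True
    define m where "m = c' i / c i"
    define d where "d = (\<lambda>k. c' k + (- m) * c k)"
    have dC: "d \<in> C" unfolding d_def by (rule lin_comb[OF c'C cC])
    have "supp d \<subseteq> {j}"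
    proof
      fix k assume k: "k \<in> supp d"
      hence "d k \<noteq> 0" by (simp add: supp_def)
      moreover have "d i = 0" using ci by (simp add: d_def m_def)
      moreover have "d k = 0" if "k \<noteq> j" "k \<noteq> i"
        using c0[OF that(2,1)] c'0[of k] that True by (simp add: d_def)
      ultimately show "k \<in> {j}" by fastforce
    qed
    hence "wt N d \<le> 1" unfolding wt_supp using card_mono[of "{j}" "supp d"] by simp
    moreover have "even (wt N d)" by (rule even_wt[OF dC])
    ultimately have "wt N d = 0" by (cases "wt N d") auto
    hence "d = (\<lambda>k. 0)" using wt0_in[OF dC] by simp
    hence "c' = (\<lambda>k. m * c k)" by (auto simp: d_def fun_eq_iff)
    moreover have "m \<noteq> 0" using ci c'i by (simp add: m_def)
    ultimately show ?thesis by blast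
  next
    case False
    obtain m where m: "m \<noteq> 0" "m \<noteq> - c i / c' i" using exists_other by blast
    define e where "e = (\<lambda>k. c k + m * c' k)"
    have eC: "e \<in> C" unfolding e_def by (rule lin_comb[OF cC c'C])
    have jnot': "c' j = 0" using c'0 False sc(2) by simp
    have j'not: "c j' = 0" using c0 False sc'(2) by simp
    have ei: "e i \<noteq> 0"
    proof
      assume "e i = 0"
      hence "c i + m * c' i = 0" by (simp add: e_def)
      hence "m = - c i / c' i" using c'i by (simp add: field_simps add_eq_0_iff)
      with m show False by simp
    qed
    have "supp e = {i, j, j'}"
    proof
      show "supp e \<subseteq> {i, j, j'}"
      proof
        fix k assume k: "k \<in> supp e"
        show "k \<in> {i, j, j'}"
        proof (rule ccontr)
          assume "k \<notin> {i, j, j'}"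
          hence "c k = 0" "c' k = 0" using c0[of k] c'0[of k] by auto
          hence "e k = 0" by (simp add: e_def)
          thus False using k by (simp add: supp_def)
        qed
      qed
      show "{i, j, j'} \<subseteq> supp e"
        using ei iN cj c'j jnot' j'not m by (auto simp: supp_def e_def)
    qed
    hence "wt N e = 3" using sc(2) sc'(2) False by (simp add: wt_supp)
    thus ?thesis using even_wt[OF eC] by simp
  qed
qed

end

context fsd_even
begin

definition S where "S = supp ` C2"

lemma supp_scale: "m \<noteq> 0 \<Longrightarrow> supp (\<lambda>k. m * c k) = supp c" by (auto simp: supp_def)

lemma finC2: "finite C2" using finC by (simp add: C2_def)
lemma finS: "finite S" unfolding S_def using finC2 by simp

lemma S_card2: "P \<in> S \<Longrightarrow> card P = 2" by (auto simp: S_def C2_def wt_supp)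

lemma S_disj:
  assumes "P \<in> S" "P' \<in> S" "P \<noteq> P'"
  shows "P \<inter> P' = {}"
proof (rule ccontr)
  assume "P \<inter> P' \<noteq> {}"
  then obtain i where i: "i \<in> P" "i \<in> P'" by blast
  obtain c c' where c: "c \<in> C2" "P = supp c" and c': "c' \<in> C2" "P' = supp c'" using assms by (auto simp: S_def)
  obtain m where "m \<noteq> 0" "c' = (\<lambda>k. m * c k)" using share[OF c(1) c'(1)] i c c' by blast
  hence "P' = P" using c c' supp_scale by simp
  thus False using assms by simp
qed

lemma fiber_card:
  assumes P: "P \<in> S"
  shows "card {c \<in> C2. supp c = P} = q - 1"
proof -
  obtain c0 where c0: "c0 \<in> C2" "supp c0 = P" using P by (auto simp: S_def)
  have c0C: "c0 \<in> C" using c0 by (simp add: C2_def)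
  obtain i where i: "i \<in> P" using S_card2[OF P] by (metis card.empty ex_in_conv zero_neq_numeral)
  have c0i: "c0 i \<noteq> 0" using i c0 by (auto simp: supp_def)
  have eq: "{c \<in> C2. supp c = P} = (\<lambda>m. \<lambda>k. m * c0 k) ` (UNIV - {0})"
  proof
    show "{c \<in> C2. supp c = P} \<subseteq> (\<lambda>m. \<lambda>k. m * c0 k) ` (UNIV - {0})"
    proof
      fix c assume c: "c \<in> {c \<in> C2. supp c = P}"
      obtain m where "m \<noteq> 0" "c = (\<lambda>k. m * c0 k)" using share[OF c0(1), of c i] c i c0 by auto
      thus "c \<in> (\<lambda>m. \<lambda>k. m * c0 k) ` (UNIV - {0})" by blast
    qed
    show "(\<lambda>m. \<lambda>k. m * c0 k) ` (UNIV - {0}) \<subseteq> {c \<in> C2. supp c = P}"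
    proof
      fix c assume "c \<in> (\<lambda>m. \<lambda>k. m * c0 k) ` (UNIV - {0})"
      then obtain m where m: "m \<noteq> 0" "c = (\<lambda>k. m * c0 k)" by blast
      have "c \<in> C" using smult_in[OF c0C] m by simp
      moreover have "supp c = P" using m supp_scale c0 by simp
      moreover have "wt N c = 2" using \<open>supp c = P\<close> S_card2[OF P] by (simp add: wt_supp)
      ultimately show "c \<in> {c \<in> C2. supp c = P}" by (simp add: C2_def)
    qed
  qed
  have inj: "inj_on (\<lambda>m. \<lambda>k. m * c0 k) (UNIV - {0})"
  proof (rule inj_onI)
    fix m m' assume "(\<lambda>k. m * c0 k) = (\<lambda>k. m' * c0 k)"
    hence "m * c0 i = m' * c0 i" by meson
    thus "m = m'" using c0i by simp
  qed
  have "card (UNIV - {0 :: 'a}) = q - 1" using q_def by (simp add: card_Diff_singleton)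
  thus ?thesis using eq card_image[OF inj] by simp
qed

lemma card_S: "card S = n"
proof -
  have C2eq: "C2 = (\<Union>P\<in>S. {c \<in> C2. supp c = P})" by (auto simp: S_def)
  have "card C2 = (\<Sum>P\<in>S. card {c \<in> C2. supp c = P})"
    by (subst C2eq, rule card_UN_disjoint) (use finS finC2 in auto)
  also have "\<dots> = (\<Sum>P\<in>S. q - 1)" by (rule sum.cong[OF refl]) (rule fiber_card)
  also have "\<dots> = card S * (q - 1)" by simp
  finally have "n * (q - 1) = card S * (q - 1)" using C2_card by simp
  thus ?thesis using q_gt by simp
qed

lemma Union_S: "\<Union>S = {..<N}"
proof -
  have sub: "\<Union>S \<subseteq> {..<N}" using supp_sub by (auto simp: S_def)
  have "card (\<Union>S) = sum card S"
    by (rule card_Union_disjoint) (use S_disj fin_supp in \<open>auto simp: pairwise_def disjnt_def S_def\<close>)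
  also have "\<dots> = (\<Sum>P\<in>S. 2)" by (rule sum.cong[OF refl]) (rule S_card2)
  also have "\<dots> = N" using card_S by simp
  finally have "card (\<Union>S) = card {..<N}" by simp
  thus ?thesis using sub by (intro card_subset_eq) auto
qed

end

context fsd_even
begin

theorem even_final: "monomially_equivalent N C (rep_sum_code n)"
proof -
  obtain f where f: "bij_betw f {..<n} S"
    using ex_bij_betw_nat_finite[OF finS] card_S by (metis atLeast0LessThan)
  have fS: "k < n \<Longrightarrow> f k \<in> S" for k using f by (auto simp: bij_betw_def)
  have finj: "k < n \<Longrightarrow> k' < n \<Longrightarrow> k \<noteq> k' \<Longrightarrow> f k \<inter> f k' = {}" for k k'
  proof -
    assume k: "k < n" "k' < n" "k \<noteq> k'"
    have "f k \<noteq> f k'" using f k unfolding bij_betw_def inj_on_def by auto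
    thus "f k \<inter> f k' = {}" using S_disj fS k by simp
  qed
  define A where "A k = Min (f k)" for k
  define B where "B k = Max (f k)" for k
  have AB: "f k = {A k, B k} \<and> A k \<noteq> B k" if k: "k < n" for k
  proof -
    obtain x y where xy: "f k = {x, y}" "x \<noteq> y" using S_card2[OF fS[OF k]] by (auto simp: card_2_iff)
    have "A k = min x y" "B k = max x y" using xy by (auto simp: A_def B_def)
    thus ?thesis using xy by (auto simp: min_def max_def)
  qed
  define e where "e k = (SOME c. c \<in> C2 \<and> supp c = f k)" for k
  have e: "e k \<in> C2 \<and> supp (e k) = f k" if "k < n" for k
  proof -
    have "\<exists>c. c \<in> C2 \<and> supp c = f k" using fS[OF that] by (auto simp: S_def)
    thus ?thesis unfolding e_def by (rule someI_ex)
  qed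
  have eC: "k < n \<Longrightarrow> e k \<in> C" for k using e by (auto simp: C2_def)
  have enz: "e k i \<noteq> 0" if "k < n" "i \<in> f k" for k i
    using e[OF that(1)] that(2) by (auto simp: supp_def)
  have ez: "e k i = 0" if "k < n" "i \<notin> f k" for k i
  proof (cases "i < N")
    case True thus ?thesis using e[OF that(1)] that(2) by (auto simp: supp_def)
  next
    case False thus ?thesis using vec_zero[OF eC[OF that(1)]] by simp
  qed
  define g where "g x = (\<lambda>i. \<Sum>k<n. x k * e k i)" for x :: "nat \<Rightarrow> 'a"
  have gK: "(\<lambda>i. \<Sum>k\<in>K. x k * e k i) \<in> C" if "K \<subseteq> {..<n}" for K x
  proof -
    have "finite K" using that finite_subset by blast
    thus ?thesis using that
    proof (induction K rule: finite_induct)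
      case empty then show ?case using zero_in by simp
    next
      case (insert k K)
      have "(\<lambda>i. \<Sum>k\<in>insert k K. x k * e k i) = (\<lambda>i. (\<Sum>k\<in>K. x k * e k i) + x k * e k i)"
        using insert by (simp add: add.commute)
      also have "\<dots> \<in> C" using insert by (intro lin_comb eC) auto
      finally show ?case .
    qed
  qed
  have gC: "g x \<in> C" for x unfolding g_def by (rule gK) simp
  have g_at: "g x i = x k * e k i" if k: "k < n" and i: "i \<in> f k" for x k i
  proof -
    have "g x i = (\<Sum>k'<n. if k' = k then x k * e k i else 0)"
      unfolding g_def
    proof (rule sum.cong[OF refl])
      fix k' assume "k' \<in> {..<n}"
      thus "x k' * e k' i = (if k' = k then x k * e k i else 0)"
        using finj[OF _ k, of k'] ez[of k' i] i by auto
    qed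
    also have "\<dots> = x k * e k i" using k by simp
    finally show ?thesis .
  qed
  define PE where "PE = (\<Pi>\<^sub>E k\<in>{..<n}. (UNIV :: 'a set))"
  have gPE: "g ` UNIV = g ` PE"
  proof
    show "g ` UNIV \<subseteq> g ` PE"
    proof
      fix c assume "c \<in> g ` UNIV"
      then obtain x where x: "c = g x" by blast
      have "g x = g (restrict x {..<n})" unfolding g_def by (auto simp: restrict_def)
      moreover have "restrict x {..<n} \<in> PE" by (simp add: PE_def)
      ultimately show "c \<in> g ` PE" using x by blast
    qed
  qed auto
  have ginj: "inj_on g PE"
  proof (rule inj_onI)
    fix x y assume x: "x \<in> PE" and y: "y \<in> PE" and eq: "g x = g y"
    show "x = y"
    proof (rule PiE_ext[OF x[unfolded PE_def] y[unfolded PE_def]])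
      fix k assume k: "k \<in> {..<n}"
      hence k': "k < n" by simp
      have Ak: "A k \<in> f k" using AB[OF k'] by simp
      have "g x (A k) = g y (A k)" using eq by simp
      hence "x k * e k (A k) = y k * e k (A k)" by (simp only: g_at[OF k' Ak])
      thus "x k = y k" using enz[OF k' Ak] by simp
    qed
  qed
  have "card (g ` UNIV) = card PE" using gPE card_image[OF ginj] by simp
  also have "card PE = q ^ n" unfolding PE_def by (simp add: card_PiE q_def)
  finally have "card (g ` UNIV) = q ^ n" .
  hence Ceq: "C = g ` UNIV"
    using gC card_C finC by (intro card_subset_eq[symmetric]) auto
  define \<sigma> where "\<sigma> i = (if i < N then (if even i then A (i div 2) else B (i div 2)) else i)" for i
  define d where "d i = inverse (e (i div 2) (\<sigma> i))" for i
  have \<sigma>_in: "\<sigma> i \<in> f (i div 2)" if "i < N" for i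
    using AB[of "i div 2"] that by (auto simp: \<sigma>_def)
  have idiv: "i < N \<Longrightarrow> i div 2 < n" for i by simp
  have \<sigma>_inj: "inj_on \<sigma> {..<N}"
  proof (rule inj_onI)
    fix i i' assume i: "i \<in> {..<N}" and i': "i' \<in> {..<N}" and eq: "\<sigma> i = \<sigma> i'"
    have kk: "i div 2 = i' div 2"
    proof (rule ccontr)
      assume ne: "i div 2 \<noteq> i' div 2"
      have "\<sigma> i \<in> f (i div 2)" using \<sigma>_in i by simp
      moreover have "\<sigma> i \<in> f (i' div 2)" using \<sigma>_in[of i'] i' eq by simp
      ultimately have "\<sigma> i \<in> f (i div 2) \<inter> f (i' div 2)" by simp
      moreover have "f (i div 2) \<inter> f (i' div 2) = {}" using finj[OF idiv idiv ne] i i' by simp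
      ultimately show False by simp
    qed
    have "even i = even i'"
    proof (rule ccontr)
      assume "even i \<noteq> even i'"
      hence "A (i div 2) = B (i div 2)" using eq kk i i' by (auto simp: \<sigma>_def split: if_splits)
      thus False using AB[OF idiv] i by auto
    qed
    moreover have "i = 2 * (i div 2) + i mod 2" "i' = 2 * (i' div 2) + i' mod 2" by simp_all
    moreover have "i mod 2 = i' mod 2" using \<open>even i = even i'\<close> by (cases "even i") (auto simp: even_iff_mod_2_eq_zero odd_iff_mod_2_eq_one)
    ultimately show "i = i'" using kk by simp
  qed
  have \<sigma>_sub: "\<sigma> ` {..<N} \<subseteq> {..<N}"
  proof
    fix v assume "v \<in> \<sigma> ` {..<N}"
    then obtain i where i: "i < N" "v = \<sigma> i" by blast
    have "v \<in> \<Union>S" using \<sigma>_in[OF i(1)] fS[OF idiv[OF i(1)]] i(2) by blast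
    thus "v \<in> {..<N}" using Union_S by simp
  qed
  have "\<sigma> ` {..<N} = {..<N}"
    using \<sigma>_sub card_image[OF \<sigma>_inj] by (intro card_subset_eq) auto
  hence \<sigma>_bij: "bij_betw \<sigma> {..<N} {..<N}"
    unfolding bij_betw_def using \<sigma>_inj by simp
  have \<sigma>_perm: "\<sigma> permutes {..<N}"
    by (rule bij_imp_permutes[OF \<sigma>_bij]) (simp add: \<sigma>_def)
  have d_nz: "\<forall>i<N. d i \<noteq> 0"
    using enz \<sigma>_in idiv by (auto simp: d_def)
  have img: "(\<lambda>i. if i < N then d i * g x (\<sigma> i) else 0) = (\<lambda>i. if i < N then x (i div 2) else 0)" for x
  proof
    fix i show "(if i < N then d i * g x (\<sigma> i) else 0) = (if i < N then x (i div 2) else 0)"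
    proof (cases "i < N")
      case True
      have "g x (\<sigma> i) = x (i div 2) * e (i div 2) (\<sigma> i)" by (rule g_at[OF idiv[OF True] \<sigma>_in[OF True]])
      moreover have "e (i div 2) (\<sigma> i) \<noteq> 0" by (rule enz[OF idiv[OF True] \<sigma>_in[OF True]])
      ultimately show ?thesis using True by (simp add: d_def)
    qed simp
  qed
  have "rep_sum_code n = (\<lambda>c. \<lambda>i. if i < N then d i * c (\<sigma> i) else 0) ` C"
  proof
    show "(\<lambda>c. \<lambda>i. if i < N then d i * c (\<sigma> i) else 0) ` C \<subseteq> rep_sum_code n"
    proof
      fix v assume "v \<in> (\<lambda>c. \<lambda>i. if i < N then d i * c (\<sigma> i) else 0) ` C"
      then obtain x where "v = (\<lambda>i. if i < N then d i * g x (\<sigma> i) else 0)" using Ceq by blast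
      hence "v = (\<lambda>i. if i < N then x (i div 2) else 0)" using img by simp
      thus "v \<in> rep_sum_code n" by (auto simp: rep_sum_code_def)
    qed
    show "rep_sum_code n \<subseteq> (\<lambda>c. \<lambda>i. if i < N then d i * c (\<sigma> i) else 0) ` C"
    proof
      fix v :: "nat \<Rightarrow> 'a" assume "v \<in> rep_sum_code n"
      then obtain a where a: "v = (\<lambda>i. if i < N then a (i div 2) else 0)" by (auto simp: rep_sum_code_def)
      hence "v = (\<lambda>i. if i < N then d i * g a (\<sigma> i) else 0)" using img by simp
      thus "v \<in> (\<lambda>c. \<lambda>i. if i < N then d i * c (\<sigma> i) else 0) ` C" using gC by blast
    qed
  qed
  thus ?thesis unfolding monomially_equivalent_def using \<sigma>_perm d_nz by blast
qed

end

theorem corollary3p7: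
  fixes C :: "(nat \<Rightarrow> 'a::{finite,field}) set" and n :: nat
  assumes "card (UNIV :: 'a set) > 4"
    and "linear_code (2 * n) C"
    and "formally_self_dual (2 * n) C"
    and "divisible_code (2 * n) C"
  shows "monomially_equivalent (2 * n) C (rep_sum_code n)"
proof (cases "n = 0")
  case True
  have Csub: "C \<subseteq> {(\<lambda>i. 0)}"
    using assms(2) True unfolding linear_code_def vecs_def by (auto simp: fun_eq_iff)
  have "(\<lambda>i. 0) \<in> C" using assms(2) unfolding linear_code_def by blast
  hence Ceq: "C = {(\<lambda>i. 0)}" using Csub by blast
  have R: "rep_sum_code n = {(\<lambda>i. 0)}" using True by (auto simp: rep_sum_code_def)
  have "id permutes {..<2 * n}" by (rule permutes_id)
  thus ?thesis unfolding monomially_equivalent_def R Ceq using True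
    by (intro exI[of _ "\<lambda>i. 1"] exI[of _ id]) auto
next
  case False
  hence n1: "n \<ge> 1" by simp
  obtain D where D: "D > 1" "\<And>c. c \<in> C \<Longrightarrow> D dvd wt (2 * n) c"
    using assms(4) unfolding divisible_code_def by blast
  obtain l where l: "prime l" "l dvd D" using prime_factor_nat[of D] D(1) by auto
  have ldvd: "\<And>c. c \<in> C \<Longrightarrow> l dvd wt (2 * n) c" using D(2) l(2) dvd_trans by blast
  interpret fsd_div C n "card (UNIV :: 'a set)" l
    by unfold_locales (use assms l(1) ldvd n1 in auto)
  show ?thesis
  proof (cases "l = 2")
    case True
    interpret fsd_even C n "card (UNIV :: 'a set)" l
      by unfold_locales (rule True)
    show ?thesis by (rule even_final)
  next
    case False
    thus ?thesis using odd_case_false by blast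
  qed
qed


end
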